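(* Fix $m\ge1$ and let $F_m\subseteq P$ be the set of classes $[f]$ where $f$ is a multicolored forest of corank $m$. Any two elements $[f_1],[f_2]\in F_m$ have a least upper bound $[f_1]\vee[f_2]$ in $(F_m,\le)$. If $[f_1]$ and $[f_2]$ can both be represented by elementary multicolored forests, then so can $[f_1]\vee[f_2]$.
   Context: Let $\mathfrak C=\{0,1\}^{\omega}$, $S$ a nonempty set, $G$ a subgroup of the symmetric group of $S$, and $\mathfrak C^S$ the space of functions $S\to\mathfrak C$. For $\psi\colon S\to\{0,1\}^*$ with $\psi(s)=\varnothing$ for all but finitely many $s$, the dyadic brick $B(\psi)$ is the set of $\kappa\in\mathfrak C^S$ with $\psi(s)$ a prefix of $\kappa(s)$ for all $s$; $\Phi_\psi(\kappa)(s)=\psi(s)\cdot\kappa(s)$ is the canonical homeomorphism $\mathfrak C^S\to B(\psi)$; for $\gamma\in G$, $\tau_\gamma(\kappa)(s)=\kappa(\gamma^{-1}s)$, and the twist homeomorphism $B(\varphi)\to B(\psi)$ associated to $\gamma$ is $\Phi_\psi\tau_\gamma\Phi_\varphi^{-1}$. For $m\ge1$, let $\mathfrak C^S(m)=\mathfrak C^S_1\sqcup\dots\sqcup\mathfrak C^S_m$ be a disjoint union of $m$ copies of $\mathfrak C^S$, with $\mathfrak C^S(1)=\mathfrak C^S$. A dyadic brick in $\mathfrak C^S(m)$ is a dyadic brick in one of the cubes; canonical and twist homeomorphisms between bricks in possibly different cubes are defined via the identifications of each cube with $\mathfrak C^S$. $S\mathcal V_G$ is the set of homeomorphisms $h\colon\mathfrak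 C^S(m)\to\mathfrak C^S(n)$ ($m,n\ge1$) for which there are partitions of $\mathfrak C^S(m)$ and $\mathfrak C^S(n)$ into the same number of dyadic bricks $B_i$, $B_i'$ and $\gamma_i\in G$ such that $h$ maps each $B_i$ to $B_i'$ by the twist homeomorphism associated to $\gamma_i$; $n$ is the rank and $m$ the corank of $h$. For $\sigma\in\Sigma_n$, $p_\sigma$ maps each $\mathfrak C^S_i$ to $\mathfrak C^S_{\sigma(i)}$ by the identity identification; a twisted permutation of $\mathfrak C^S(n)$ is $(\tau_{\gamma_1}\oplus\dots\oplus\tau_{\gamma_n})p_\sigma$ (where $\oplus$ applies maps to consecutive cubes), and these form a group $\mathcal G(n)\cong G\wr\Sigma_n$. A very elementary expansion of a partition $\mathcal P$ of $\mathfrak C^S(m)$ into dyadic bricks is a partition $\mathcal P'$ into dyadic bricks such that every brick of $\mathcal P$ is a union of at most two bricks of $\mathcal P'$; a dyadic partition of $\mathfrak C^S(m)$ is one obtained from $\{\mathfrak C^S_1,\dots,\mathfrak C^S_m\}$ by finitely many very elementary expansions. A multicolored forest is a homeomorphism $f\colon\mathfrak C^S(m)\to\mathfrak C^S(n)$ mapping the bricks $B_1,\dots,B_n$ of some dyadic partition of $\mathfrak C^S(m)$ onto $\mathfrak C^S_1,\dots,\mathfrak C^S_n$ respectively by canonical homeomorphisms. A dyadic brick $B(\psi)$ is elementary if $\psi(s)\in\{\varnothing,0,1\}$ for all $s\in S$; a multicolored forest is elementary if the bricks of its dyadic partition are all elementary. For $h\in S\mathcal V_G$ of rank $n$ write $[h]=\mathcal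 G(n)h$, and let $P$ be the set of all such classes. For $v,w\in P$, $v\le w$ means there exist $h\in S\mathcal V_G$ and a multicolored forest $f$ with $v=[h]$ and $w=[fh]$; this is a partial order. *)

theory Defs
  imports "HOL-Analysis.Analysis" "HOL-Library.FuncSet" "HOL-Combinatorics.Permutations"
begin

text \<open>Cantor space C = nat => bool; finite binary words = bool list;
  a point of C^S is a map 'a => C (the type 'a plays the role of S).
  A point of C^S(m) is a pair (i, kappa) with i < m (cubes indexed 0..m-1).\<close>

type_synonym 'a cpt = "'a \<Rightarrow> nat \<Rightarrow> bool"

definition is_prefix :: "bool list \<Rightarrow> (nat \<Rightarrow> bool) \<Rightarrow> bool" where
  "is_prefix w x \<longleftrightarrow> (\<forall>i < length w. x i = w ! i)"

definition wcat :: "bool list \<Rightarrow> (nat \<Rightarrow> bool) \<Rightarrow> (nat \<Rightarrow> bool)" where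
  "wcat w x = (\<lambda>i. if i < length w then w ! i else x (i - length w))"

definition wdrop :: "bool list \<Rightarrow> (nat \<Rightarrow> bool) \<Rightarrow> (nat \<Rightarrow> bool)" where
  "wdrop w x = (\<lambda>i. x (i + length w))"

definition fin_supp :: "('a \<Rightarrow> bool list) \<Rightarrow> bool" where
  "fin_supp \<psi> \<longleftrightarrow> finite {s. \<psi> s \<noteq> []}"

definition brick :: "('a \<Rightarrow> bool list) \<Rightarrow> 'a cpt set" where
  "brick \<psi> = {\<kappa>. \<forall>s. is_prefix (\<psi> s) (\<kappa> s)}"

definition Phi :: "('a \<Rightarrow> bool list) \<Rightarrow> 'a cpt \<Rightarrow> 'a cpt" where
  "Phi \<psi> \<kappa> = (\<lambda>s. wcat (\<psi> s) (\<kappa> s))"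

definition Phi_inv :: "('a \<Rightarrow> bool list) \<Rightarrow> 'a cpt \<Rightarrow> 'a cpt" where
  "Phi_inv \<psi> \<kappa> = (\<lambda>s. wdrop (\<psi> s) (\<kappa> s))"

definition tau :: "('a \<Rightarrow> 'a) \<Rightarrow> 'a cpt \<Rightarrow> 'a cpt" where
  "tau \<gamma> \<kappa> = (\<lambda>s. \<kappa> (inv \<gamma> s))"

definition twist :: "('a \<Rightarrow> bool list) \<Rightarrow> ('a \<Rightarrow> bool list) \<Rightarrow> ('a \<Rightarrow> 'a) \<Rightarrow> 'a cpt \<Rightarrow> 'a cpt" where
  "twist \<phi> \<psi> \<gamma> = Phi \<psi> \<circ> tau \<gamma> \<circ> Phi_inv \<phi>"

definition perm_subgroup :: "('a \<Rightarrow> 'a) set \<Rightarrow> bool" where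
  "perm_subgroup G \<longleftrightarrow> (\<forall>g\<in>G. bij g) \<and> id \<in> G \<and>
     (\<forall>g\<in>G. \<forall>h\<in>G. g \<circ> h \<in> G) \<and> (\<forall>g\<in>G. inv g \<in> G)"

definition cantor_top :: "(nat \<Rightarrow> bool) topology" where
  "cantor_top = product_topology (\<lambda>_. discrete_topology (UNIV::bool set)) UNIV"

definition CS_top :: "'a cpt topology" where
  "CS_top = product_topology (\<lambda>_. cantor_top) UNIV"

definition cubes :: "nat \<Rightarrow> (nat \<times> 'a cpt) topology" where
  "cubes m = sum_topology (\<lambda>_. CS_top) {..<m}"

definition carr :: "nat \<Rightarrow> (nat \<times> 'a cpt) set" where
  "carr m = {..<m} \<times> UNIV"

text \<open>A dyadic brick in C^S(m) is described by (cube index, psi).\<close>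
type_synonym 'a bdesc = "nat \<times> ('a \<Rightarrow> bool list)"

definition valid_brick :: "nat \<Rightarrow> 'a bdesc \<Rightarrow> bool" where
  "valid_brick m b \<longleftrightarrow> fst b < m \<and> fin_supp (snd b)"

definition bset :: "'a bdesc \<Rightarrow> (nat \<times> 'a cpt) set" where
  "bset b = {fst b} \<times> brick (snd b)"

text \<open>morphisms are represented as functions extensional on the domain carrier\<close>
type_synonym 'a cmap = "nat \<times> 'a cpt \<Rightarrow> nat \<times> 'a cpt"

definition SV :: "('a \<Rightarrow> 'a) set \<Rightarrow> nat \<Rightarrow> nat \<Rightarrow> 'a cmap \<Rightarrow> bool" where
  "SV G m n h \<longleftrightarrow> 1 \<le> m \<and> 1 \<le> n \<and>
     homeomorphic_map (cubes m) (cubes n) h \<and> h \<in> extensional (carr m) \<and>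
     (\<exists>(k::nat) (P::nat \<Rightarrow> 'a bdesc) (Q::nat \<Rightarrow> 'a bdesc) (\<gamma>::nat \<Rightarrow> 'a \<Rightarrow> 'a).
        (\<forall>j<k. valid_brick m (P j) \<and> valid_brick n (Q j) \<and> \<gamma> j \<in> G) \<and>
        (\<forall>j<k. \<forall>j'<k. j \<noteq> j' \<longrightarrow> bset (P j) \<inter> bset (P j') = {} \<and> bset (Q j) \<inter> bset (Q j') = {}) \<and>
        (\<Union>j<k. bset (P j)) = carr m \<and> (\<Union>j<k. bset (Q j)) = carr n \<and>
        (\<forall>j<k. \<forall>x\<in>bset (P j). h x = (fst (Q j), twist (snd (P j)) (snd (Q j)) (\<gamma> j) (snd x))))"

definition twperm :: "nat \<Rightarrow> (nat \<Rightarrow> nat) \<Rightarrow> (nat \<Rightarrow> 'a \<Rightarrow> 'a) \<Rightarrow> 'a cmap" where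
  "twperm n \<sigma> \<gamma> = restrict (\<lambda>(i, \<kappa>). (\<sigma> i, tau (\<gamma> (\<sigma> i)) \<kappa>)) (carr n)"

definition twisted_perms :: "('a \<Rightarrow> 'a) set \<Rightarrow> nat \<Rightarrow> 'a cmap set" where
  "twisted_perms G n = {twperm n \<sigma> \<gamma> | \<sigma> \<gamma>. \<sigma> permutes {..<n} \<and> (\<forall>i<n. \<gamma> i \<in> G)}"

definition cls :: "('a \<Rightarrow> 'a) set \<Rightarrow> nat \<Rightarrow> nat \<Rightarrow> 'a cmap \<Rightarrow> 'a cmap set" where
  "cls G m n h = {compose (carr m) p h | p. p \<in> twisted_perms G n}"

definition Pcls :: "('a \<Rightarrow> 'a) set \<Rightarrow> 'a cmap set set" where
  "Pcls G = {cls G m n h | m n h. SV G m n h}"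

definition brick_partition :: "nat \<Rightarrow> 'a bdesc set \<Rightarrow> bool" where
  "brick_partition m P \<longleftrightarrow> finite P \<and> (\<forall>b\<in>P. valid_brick m b) \<and>
     (\<forall>b\<in>P. \<forall>b'\<in>P. b \<noteq> b' \<longrightarrow> bset b \<inter> bset b' = {}) \<and> (\<Union>b\<in>P. bset b) = carr m"

definition very_elem_expansion :: "nat \<Rightarrow> 'a bdesc set \<Rightarrow> 'a bdesc set \<Rightarrow> bool" where
  "very_elem_expansion m P P' \<longleftrightarrow> brick_partition m P' \<and>
     (\<forall>b\<in>P. \<exists>b1\<in>P'. \<exists>b2\<in>P'. bset b = bset b1 \<union> bset b2)"

inductive dyadic_partition :: "nat \<Rightarrow> 'a bdesc set \<Rightarrow> bool" for m where
  base: "dyadic_partition m {(i, \<lambda>_. []) | i. i < m}"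
| step: "dyadic_partition m P \<Longrightarrow> very_elem_expansion m P P' \<Longrightarrow> dyadic_partition m P'"

definition mc_forest_via :: "nat \<Rightarrow> nat \<Rightarrow> 'a cmap \<Rightarrow> (nat \<Rightarrow> 'a bdesc) \<Rightarrow> bool" where
  "mc_forest_via m n f B \<longleftrightarrow>
     homeomorphic_map (cubes m) (cubes n) f \<and> f \<in> extensional (carr m) \<and>
     dyadic_partition m (B ` {..<n}) \<and> inj_on B {..<n} \<and>
     (\<forall>j<n. \<forall>x\<in>bset (B j). f x = (j, Phi_inv (snd (B j)) (snd x)))"

definition mc_forest :: "nat \<Rightarrow> nat \<Rightarrow> 'a cmap \<Rightarrow> bool" where
  "mc_forest m n f \<longleftrightarrow> (\<exists>B. mc_forest_via m n f B)"

definition elem_mc_forest :: "nat \<Rightarrow> nat \<Rightarrow> 'a cmap \<Rightarrow> bool" where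
  "elem_mc_forest m n f \<longleftrightarrow> (\<exists>B. mc_forest_via m n f B \<and>
     (\<forall>j<n. \<forall>s. snd (B j) s \<in> {[], [False], [True]}))"

definition cls_le :: "('a \<Rightarrow> 'a) set \<Rightarrow> 'a cmap set \<Rightarrow> 'a cmap set \<Rightarrow> bool" where
  "cls_le G v w \<longleftrightarrow> (\<exists>m n n' h f. SV G m n h \<and> mc_forest n n' f \<and>
     v = cls G m n h \<and> w = cls G m n' (compose (carr m) f h))"

definition Fm :: "('a \<Rightarrow> 'a) set \<Rightarrow> nat \<Rightarrow> 'a cmap set set" where
  "Fm G m = {cls G m n f | n f. mc_forest m n f}"

definition is_lub_in :: "('a \<Rightarrow> 'a) set \<Rightarrow> 'a cmap set set \<Rightarrow> 'a cmap set \<Rightarrow> 'a cmap set \<Rightarrow> 'a cmap set \<Rightarrow> bool" where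
  "is_lub_in G X v1 v2 u \<longleftrightarrow> u \<in> X \<and> cls_le G v1 u \<and> cls_le G v2 u \<and>
     (\<forall>u'\<in>X. cls_le G v1 u' \<and> cls_le G v2 u' \<longrightarrow> cls_le G u u')"

definition elem_rep :: "('a \<Rightarrow> 'a) set \<Rightarrow> nat \<Rightarrow> 'a cmap set \<Rightarrow> bool" where
  "elem_rep G m v \<longleftrightarrow> (\<exists>n f. elem_mc_forest m n f \<and> v = cls G m n f)"

end

theory Submission
  imports Defs
begin


lemma topspace_CS [simp]: "topspace (CS_top :: 'a cpt topology) = UNIV"
  by (simp add: CS_top_def cantor_top_def)

lemma topspace_cubes [simp]: "topspace (cubes m :: (nat \<times> 'a cpt) topology) = carr m"
  by (auto simp: cubes_def carr_def)

lemma carr_iff [simp]: "x \<in> carr m \<longleftrightarrow> fst x < m"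
  by (cases x) (auto simp: carr_def)

lemma wdrop_wcat [simp]: "wdrop w (wcat w x) = x"
  by (auto simp: wdrop_def wcat_def)

lemma prefix_wcat [simp]: "is_prefix w (wcat w x)"
  by (auto simp: is_prefix_def wcat_def)

lemma wcat_wdrop: "is_prefix w x \<Longrightarrow> wcat w (wdrop w x) = x"
  by (auto simp: is_prefix_def wcat_def wdrop_def)

lemma Phi_inv_Phi [simp]: "Phi_inv \<psi> (Phi \<psi> \<kappa>) = \<kappa>"
  by (auto simp: Phi_def Phi_inv_def)

lemma Phi_in_brick [simp]: "Phi \<psi> \<kappa> \<in> brick \<psi>"
  by (auto simp: Phi_def brick_def)

lemma Phi_Phi_inv: "\<kappa> \<in> brick \<psi> \<Longrightarrow> Phi \<psi> (Phi_inv \<psi> \<kappa>) = \<kappa>"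
  by (auto simp: Phi_def Phi_inv_def brick_def wcat_wdrop)

lemma brick_nonempty: "brick \<psi> \<noteq> {}"
  using Phi_in_brick by blast

lemma prefix_take:
  assumes "is_prefix u x" "is_prefix v x" "length u \<le> length v"
  shows "u = take (length u) v"
  using assms by (auto simp: is_prefix_def intro!: nth_equalityI)

lemma prefix_takeI: "is_prefix v x \<Longrightarrow> is_prefix (take k v) x"
  by (auto simp: is_prefix_def)

lemma brick_subset_iff:
  "brick \<psi> \<subseteq> brick \<phi> \<longleftrightarrow> (\<forall>s. length (\<phi> s) \<le> length (\<psi> s) \<and> \<phi> s = take (length (\<phi> s)) (\<psi> s))"
proof
  assume H: "brick \<psi> \<subseteq> brick \<phi>"
  show "\<forall>s. length (\<phi> s) \<le> length (\<psi> s) \<and> \<phi> s = take (length (\<phi> s)) (\<psi> s)"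
  proof
    fix s
    define k0 where "k0 = Phi \<psi> (\<lambda>_ _. False)"
    define k1 where "k1 = Phi \<psi> (\<lambda>_ _. True)"
    have "k0 \<in> brick \<phi>" "k1 \<in> brick \<phi>" using H by (auto simp: k0_def k1_def)
    then have p0: "is_prefix (\<phi> s) (k0 s)" and p1: "is_prefix (\<phi> s) (k1 s)" by (auto simp: brick_def)
    have L: "length (\<phi> s) \<le> length (\<psi> s)"
    proof (rule ccontr)
      assume "\<not> ?thesis"
      then have "length (\<psi> s) < length (\<phi> s)" by simp
      then have "k0 s (length (\<psi> s)) = k1 s (length (\<psi> s))"
        using p0 p1 by (simp add: is_prefix_def)
      then show False by (simp add: k0_def k1_def Phi_def wcat_def)
    qed
    have "is_prefix (\<psi> s) (k0 s)" by (simp add: k0_def Phi_def)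
    then show "length (\<phi> s) \<le> length (\<psi> s) \<and> \<phi> s = take (length (\<phi> s)) (\<psi> s)"
      using prefix_take[OF p0 _ L] L by simp
  qed
next
  assume H: "\<forall>s. length (\<phi> s) \<le> length (\<psi> s) \<and> \<phi> s = take (length (\<phi> s)) (\<psi> s)"
  show "brick \<psi> \<subseteq> brick \<phi>"
  proof
    fix \<kappa> assume "\<kappa> \<in> brick \<psi>"
    then have P: "\<And>s. is_prefix (\<psi> s) (\<kappa> s)" by (simp add: brick_def)
    have "is_prefix (\<phi> s) (\<kappa> s)" for s
      using spec[OF H, of s] prefix_takeI[OF P[of s], of "length (\<phi> s)"] by simp
    then show "\<kappa> \<in> brick \<phi>" by (simp add: brick_def)
  qed
qed

lemma brick_inj: "brick \<psi> = brick \<phi> \<Longrightarrow> \<psi> = \<phi>"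
proof
  fix s assume "brick \<psi> = brick \<phi>"
  then have "brick \<psi> \<subseteq> brick \<phi>" "brick \<phi> \<subseteq> brick \<psi>" by auto
  then show "\<psi> s = \<phi> s" unfolding brick_subset_iff
    by (metis le_antisym take_all_iff)
qed

lemma bset_nonempty: "bset b \<noteq> {}"
  using brick_nonempty by (auto simp: bset_def)

lemma bset_inj: "bset b = bset c \<Longrightarrow> b = c"
proof -
  assume H: "bset b = bset c"
  obtain x where x: "x \<in> bset b" using bset_nonempty by blast
  then have "fst b = fst c" using H by (auto simp: bset_def)
  moreover have "brick (snd b) = brick (snd c)"
    using H \<open>fst b = fst c\<close> by (auto simp: bset_def)
  ultimately show ?thesis by (metis brick_inj prod.expand)
qed

definition wmeet :: "('a \<Rightarrow> bool list) \<Rightarrow> ('a \<Rightarrow> bool list) \<Rightarrow> ('a \<Rightarrow> bool list)" where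
  "wmeet \<psi> \<phi> = (\<lambda>s. if length (\<psi> s) \<le> length (\<phi> s) then \<phi> s else \<psi> s)"

definition bmeet :: "'a bdesc \<Rightarrow> 'a bdesc \<Rightarrow> 'a bdesc" where
  "bmeet b c = (fst b, wmeet (snd b) (snd c))"

lemma brick_meet:
  assumes "brick \<psi> \<inter> brick \<phi> \<noteq> {}"
  shows "brick \<psi> \<inter> brick \<phi> = brick (wmeet \<psi> \<phi>)"
proof -
  obtain k0 where k0: "k0 \<in> brick \<psi>" "k0 \<in> brick \<phi>" using assms by blast
  show ?thesis
  proof
    show "brick \<psi> \<inter> brick \<phi> \<subseteq> brick (wmeet \<psi> \<phi>)"
      by (auto simp: brick_def wmeet_def)
  next
    show "brick (wmeet \<psi> \<phi>) \<subseteq> brick \<psi> \<inter> brick \<phi>"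
    proof
      fix \<kappa> assume k: "\<kappa> \<in> brick (wmeet \<psi> \<phi>)"
      have "is_prefix (\<psi> s) (\<kappa> s) \<and> is_prefix (\<phi> s) (\<kappa> s)" for s
      proof (cases "length (\<psi> s) \<le> length (\<phi> s)")
        case True
        then have "\<psi> s = take (length (\<psi> s)) (\<phi> s)"
          using prefix_take[of "\<psi> s" "k0 s" "\<phi> s"] k0 by (auto simp: brick_def)
        moreover have "is_prefix (\<phi> s) (\<kappa> s)"
        proof -
          have "is_prefix (wmeet \<psi> \<phi> s) (\<kappa> s)" using k by (simp add: brick_def)
          then show ?thesis using True by (simp add: wmeet_def)
        qed
        ultimately show ?thesis using prefix_takeI[of "\<phi> s" "\<kappa> s" "length (\<psi> s)"] by simp
      next
        case False
        then have "\<phi> s = take (length (\<phi> s)) (\<psi> s)"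
          using prefix_take[of "\<phi> s" "k0 s" "\<psi> s"] k0 by (auto simp: brick_def)
        moreover have "is_prefix (\<psi> s) (\<kappa> s)"
        proof -
          have "is_prefix (wmeet \<psi> \<phi> s) (\<kappa> s)" using k by (simp add: brick_def)
          then show ?thesis using False by (simp add: wmeet_def)
        qed
        ultimately show ?thesis using prefix_takeI[of "\<psi> s" "\<kappa> s" "length (\<phi> s)"] by simp
      qed
      then show "\<kappa> \<in> brick \<psi> \<inter> brick \<phi>" by (auto simp: brick_def)
    qed
  qed
qed

lemma bset_meet:
  assumes "bset b \<inter> bset c \<noteq> {}"
  shows "bset b \<inter> bset c = bset (bmeet b c)" and "fst b = fst c"
proof -
  show "fst b = fst c" using assms by (auto simp: bset_def)
  have "brick (snd b) \<inter> brick (snd c) \<noteq> {}" using assms by (auto simp: bset_def)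
  then show "bset b \<inter> bset c = bset (bmeet b c)"
    using brick_meet \<open>fst b = fst c\<close> by (auto simp: bset_def bmeet_def)
qed

lemma valid_meet: "valid_brick m b \<Longrightarrow> valid_brick m c \<Longrightarrow> valid_brick m (bmeet b c)"
  unfolding valid_brick_def fin_supp_def bmeet_def
proof (intro conjI, simp)
  assume "fst b < m \<and> finite {s. snd b s \<noteq> []}" "fst c < m \<and> finite {s. snd c s \<noteq> []}"
  then have "finite ({s. snd b s \<noteq> []} \<union> {s. snd c s \<noteq> []})" by simp
  moreover have "{s. wmeet (snd b) (snd c) s \<noteq> []} \<subseteq> {s. snd b s \<noteq> []} \<union> {s. snd c s \<noteq> []}"
    by (auto simp: wmeet_def)
  ultimately show "finite {s. snd (fst b, wmeet (snd b) (snd c)) s \<noteq> []}"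
    by (simp add: finite_subset)
qed

lemma bmeet_base: "fst c = i \<Longrightarrow> bmeet (i, \<lambda>_. []) c = c"
  by (auto simp: bmeet_def wmeet_def)

lemma bmeet_sub: "bset b \<subseteq> bset c \<Longrightarrow> bmeet b c = b"
proof -
  assume H: "bset b \<subseteq> bset c"
  then have "fst b = fst c" using bset_nonempty[of b] by (auto simp: bset_def)
  with H have "brick (snd b) \<subseteq> brick (snd c)" by (auto simp: bset_def)
  then have H2: "\<And>s. length (snd c s) \<le> length (snd b s) \<and> snd c s = take (length (snd c s)) (snd b s)"
    unfolding brick_subset_iff by blast
  have "wmeet (snd b) (snd c) = snd b"
  proof
    fix s show "wmeet (snd b) (snd c) s = snd b s"
      using H2[of s] by (auto simp: wmeet_def dest: le_antisym)
  qed
  then show ?thesis using \<open>fst b = fst c\<close> by (simp add: bmeet_def prod_eq_iff)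
qed



definition base_part :: "nat \<Rightarrow> 'a bdesc set" where
  "base_part m = {(i, \<lambda>_. []) | i. i < m}"

lemma bset_base [simp]: "bset (i, \<lambda>_. []) = {i} \<times> UNIV"
  by (auto simp: bset_def brick_def is_prefix_def)

lemma bset_sub_carr: "valid_brick m b \<Longrightarrow> bset b \<subseteq> carr m"
  by (auto simp: valid_brick_def bset_def)

lemma bp_base: "brick_partition m (base_part m)"
  by (auto simp: brick_partition_def base_part_def valid_brick_def fin_supp_def)

lemma dyadic_base_part: "dyadic_partition m (base_part m)"
  using dyadic_partition.base by (simp add: base_part_def)

lemma dyadic_bp: "dyadic_partition m P \<Longrightarrow> brick_partition m P"
  by (induction rule: dyadic_partition.induct)
     (auto simp: very_elem_expansion_def bp_base[unfolded base_part_def])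

lemma bp_unique: "brick_partition m P \<Longrightarrow> b \<in> P \<Longrightarrow> b' \<in> P \<Longrightarrow> x \<in> bset b \<Longrightarrow> x \<in> bset b' \<Longrightarrow> b = b'"
  unfolding brick_partition_def by blast

lemma bp_cover: "brick_partition m P \<Longrightarrow> x \<in> carr m \<Longrightarrow> \<exists>b\<in>P. x \<in> bset b"
  unfolding brick_partition_def by blast

lemma bp_valid: "brick_partition m P \<Longrightarrow> b \<in> P \<Longrightarrow> valid_brick m b"
  unfolding brick_partition_def by blast

locale transport =
  fixes m k :: nat and Q :: "'a bdesc set"
    and E :: "'a bdesc \<Rightarrow> 'a bdesc \<Rightarrow> 'a bdesc"
    and e :: "'a bdesc \<Rightarrow> nat \<times> 'a cpt \<Rightarrow> nat \<times> 'a cpt"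
  assumes Q: "brick_partition m Q"
    and E: "\<And>q c. q \<in> Q \<Longrightarrow> valid_brick m c \<Longrightarrow> bset c \<subseteq> bset q \<Longrightarrow>
              valid_brick k (E q c) \<and> bset (E q c) = e q ` bset c"
    and einj: "\<And>q. q \<in> Q \<Longrightarrow> inj_on (e q) (bset q)"
    and edisj: "\<And>q q'. q \<in> Q \<Longrightarrow> q' \<in> Q \<Longrightarrow> q \<noteq> q' \<Longrightarrow> e q ` bset q \<inter> e q' ` bset q' = {}"
    and ecov: "carr k \<subseteq> (\<Union>q\<in>Q. e q ` bset q)"
begin

definition TT :: "'a bdesc set \<Rightarrow> 'a bdesc set" where
  "TT P = {E q (bmeet b q) | b q. b \<in> P \<and> q \<in> Q \<and> bset b \<inter> bset q \<noteq> {}}"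

lemma TT_elem:
  assumes "valid_brick m b" "q \<in> Q" "bset b \<inter> bset q \<noteq> {}"
  shows "valid_brick k (E q (bmeet b q))" "bset (E q (bmeet b q)) = e q ` (bset b \<inter> bset q)"
proof -
  have v: "valid_brick m (bmeet b q)" using valid_meet assms Q bp_valid by blast
  have s: "bset (bmeet b q) = bset b \<inter> bset q" using bset_meet(1)[OF assms(3)] by simp
  show "valid_brick k (E q (bmeet b q))" using E[OF assms(2) v] s by auto
  show "bset (E q (bmeet b q)) = e q ` (bset b \<inter> bset q)" using E[OF assms(2) v] s by auto
qed

lemma TT_bp:
  assumes P: "brick_partition m P"
  shows "brick_partition k (TT P)"
  unfolding brick_partition_def
proof (intro conjI ballI impI)
  have "TT P \<subseteq> (\<lambda>(b, q). E q (bmeet b q)) ` (P \<times> Q)" unfolding TT_def by auto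
  moreover have "finite (P \<times> Q)" using P Q by (simp add: brick_partition_def)
  ultimately show "finite (TT P)" by (meson finite_imageI finite_subset)
next
  fix t assume "t \<in> TT P"
  then show "valid_brick k t" unfolding TT_def using TT_elem(1) bp_valid[OF P] by blast
next
  fix t t' assume t: "t \<in> TT P" and t': "t' \<in> TT P" and ne: "t \<noteq> t'"
  obtain b q where b: "b \<in> P" "q \<in> Q" "bset b \<inter> bset q \<noteq> {}" "t = E q (bmeet b q)"
    using t unfolding TT_def by blast
  obtain b' q' where b': "b' \<in> P" "q' \<in> Q" "bset b' \<inter> bset q' \<noteq> {}" "t' = E q' (bmeet b' q')"
    using t' unfolding TT_def by blast
  have st: "bset t = e q ` (bset b \<inter> bset q)" using TT_elem(2) b bp_valid[OF P] by blast
  have st': "bset t' = e q' ` (bset b' \<inter> bset q')" using TT_elem(2) b' bp_valid[OF P] by blast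
  show "bset t \<inter> bset t' = {}"
  proof (cases "q = q'")
    case True
    then have "b \<noteq> b'" using ne b b' by auto
    then have "bset b \<inter> bset b' = {}" using P b b' by (simp add: brick_partition_def)
    show ?thesis
    proof (rule ccontr)
      assume "bset t \<inter> bset t' \<noteq> {}"
      then obtain y :: "nat \<times> 'a cpt" where y: "y \<in> bset t" "y \<in> bset t'" by blast
      obtain x1 where x1: "x1 \<in> bset b \<inter> bset q" "y = e q x1" using y(1) st by blast
      obtain x2 where x2: "x2 \<in> bset b' \<inter> bset q" "y = e q x2" using y(2) st' True by blast
      have x: "x1 \<in> bset b \<inter> bset q" "x2 \<in> bset b' \<inter> bset q" "e q x1 = e q x2"
        using x1 x2 by auto
      then have "x1 = x2" using einj[OF b(2)] by (auto simp: inj_on_def)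
      then show False using x \<open>bset b \<inter> bset b' = {}\<close> by blast
    qed
  next
    case False
    then show ?thesis using st st' edisj[OF b(2) b'(2)] by blast
  qed
next
  show "(\<Union>t\<in>TT P. bset t) = carr k"
  proof
    show "(\<Union>t\<in>TT P. bset t) \<subseteq> carr k"
      using bset_sub_carr TT_elem(1) bp_valid[OF P] unfolding TT_def by blast
  next
    show "carr k \<subseteq> (\<Union>t\<in>TT P. bset t)"
    proof
      fix y :: "nat \<times> 'a cpt" assume "y \<in> carr k"
      then obtain q x where q: "q \<in> Q" "x \<in> bset q" "y = e q x" using ecov by blast
      then have "x \<in> carr m" using bset_sub_carr bp_valid[OF Q] by blast
      then obtain b where b: "b \<in> P" "x \<in> bset b" using bp_cover[OF P] by blast
      then have ne: "bset b \<inter> bset q \<noteq> {}" using q by blast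
      have "y \<in> bset (E q (bmeet b q))" using TT_elem(2)[OF bp_valid[OF P b(1)] q(1) ne] q b by blast
      moreover have "E q (bmeet b q) \<in> TT P" using b q ne unfolding TT_def by blast
      ultimately show "y \<in> (\<Union>t\<in>TT P. bset t)" by blast
    qed
  qed
qed

lemma TT_vee:
  assumes "very_elem_expansion m P P'" "brick_partition m P"
  shows "very_elem_expansion k (TT P) (TT P')"
proof -
  have P': "brick_partition m P'" using assms by (simp add: very_elem_expansion_def)
  have split: "\<forall>b\<in>P. \<exists>b1\<in>P'. \<exists>b2\<in>P'. bset b = bset b1 \<union> bset b2"
    using assms by (simp add: very_elem_expansion_def)
  show ?thesis unfolding very_elem_expansion_def
  proof (intro conjI TT_bp[OF P'] ballI)
    fix t assume "t \<in> TT P"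
    then obtain b q where b: "b \<in> P" "q \<in> Q" "bset b \<inter> bset q \<noteq> {}" "t = E q (bmeet b q)"
      unfolding TT_def by blast
    obtain b1 b2 where b12: "b1 \<in> P'" "b2 \<in> P'" "bset b = bset b1 \<union> bset b2" using split b(1) by blast
    have st: "bset t = e q ` (bset b1 \<inter> bset q) \<union> e q ` (bset b2 \<inter> bset q)"
      using TT_elem(2)[OF bp_valid[OF assms(2) b(1)] b(2) b(3)] b(4) b12(3) by auto
    let ?t1 = "E q (bmeet b1 q)" and ?t2 = "E q (bmeet b2 q)"
    show "\<exists>t1\<in>TT P'. \<exists>t2\<in>TT P'. bset t = bset t1 \<union> bset t2"
    proof (cases "bset b1 \<inter> bset q = {}")
      case True
      then have ne2: "bset b2 \<inter> bset q \<noteq> {}" using b(3) b12(3) by blast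
      have "?t2 \<in> TT P'" using b12 b(2) ne2 unfolding TT_def by blast
      moreover have "bset t = bset ?t2 \<union> bset ?t2"
        using st True TT_elem(2)[OF bp_valid[OF P' b12(2)] b(2) ne2] by auto
      ultimately show ?thesis by blast
    next
      case ne1: False
      show ?thesis
      proof (cases "bset b2 \<inter> bset q = {}")
        case True
        have "?t1 \<in> TT P'" using b12 b(2) ne1 unfolding TT_def by blast
        moreover have "bset t = bset ?t1 \<union> bset ?t1"
          using st True TT_elem(2)[OF bp_valid[OF P' b12(1)] b(2) ne1] by auto
        ultimately show ?thesis by blast
      next
        case ne2: False
        have "?t1 \<in> TT P'" "?t2 \<in> TT P'" using b12 b(2) ne1 ne2 unfolding TT_def by blast+
        moreover have "bset t = bset ?t1 \<union> bset ?t2"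
          using st TT_elem(2)[OF bp_valid[OF P' b12(1)] b(2) ne1]
            TT_elem(2)[OF bp_valid[OF P' b12(2)] b(2) ne2] by auto
        ultimately show ?thesis by blast
      qed
    qed
  qed
qed

lemma TT_dyadic:
  assumes "dyadic_partition m P" "dyadic_partition k (TT (base_part m))"
  shows "dyadic_partition k (TT P)"
  using assms(1)
proof (induction rule: dyadic_partition.induct)
  case base
  then show ?case using assms(2) by (simp add: base_part_def)
next
  case (step P P')
  then show ?case using TT_vee dyadic_bp dyadic_partition.step by blast
qed

end



lemma proj_cont: "continuous_map (CS_top :: 'a cpt topology) (discrete_topology UNIV) (\<lambda>\<kappa>. \<kappa> s i)"
proof -
  have a: "continuous_map (CS_top :: 'a cpt topology) cantor_top (\<lambda>\<kappa>. \<kappa> s)"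
    unfolding CS_top_def by (rule continuous_map_product_projection) simp
  have b: "continuous_map cantor_top (discrete_topology UNIV) (\<lambda>x. x i)"
    unfolding cantor_top_def by (rule continuous_map_product_projection) simp
  show ?thesis using continuous_map_compose[OF a b] by (simp add: o_def)
qed

lemma open_coord: "openin (CS_top :: 'a cpt topology) {\<kappa>. \<kappa> s i = b}"
proof -
  have "openin CS_top {\<kappa> \<in> topspace (CS_top :: 'a cpt topology). \<kappa> s i \<in> {b}}"
    by (rule openin_continuous_map_preimage[OF proj_cont]) simp
  then show ?thesis by simp
qed

lemma open_prefix: "openin (CS_top :: 'a cpt topology) {\<kappa>. is_prefix w (\<kappa> s)}"
proof -
  have "openin CS_top ((\<Inter>i\<in>{..<length w}. {\<kappa> :: 'a cpt. \<kappa> s i = w ! i}) \<inter> topspace CS_top)"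
    by (rule openin_INT) (auto intro: open_coord)
  moreover have "(\<Inter>i\<in>{..<length w}. {\<kappa> :: 'a cpt. \<kappa> s i = w ! i}) \<inter> topspace CS_top = {\<kappa>. is_prefix w (\<kappa> s)}"
    by (auto simp: is_prefix_def)
  ultimately show ?thesis by simp
qed

lemma open_brick: assumes "fin_supp \<psi>" shows "openin (CS_top :: 'a cpt topology) (brick \<psi>)"
proof -
  have "openin CS_top ((\<Inter>s\<in>{s. \<psi> s \<noteq> []}. {\<kappa> :: 'a cpt. is_prefix (\<psi> s) (\<kappa> s)}) \<inter> topspace CS_top)"
    by (rule openin_INT) (use assms in \<open>auto simp: fin_supp_def intro: open_prefix\<close>)
  moreover have "(\<Inter>s\<in>{s. \<psi> s \<noteq> []}. {\<kappa> :: 'a cpt. is_prefix (\<psi> s) (\<kappa> s)}) \<inter> topspace CS_top = brick \<psi>"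
    by (auto simp: brick_def is_prefix_def)
  ultimately show ?thesis by simp
qed

lemma cont_Phi_inv: "continuous_map (CS_top :: 'a cpt topology) CS_top (Phi_inv \<psi>)"
proof -
  have "continuous_map (CS_top :: 'a cpt topology) (discrete_topology UNIV) (\<lambda>\<kappa>. Phi_inv \<psi> \<kappa> s i)" for s i
    using proj_cont[of s "i + length (\<psi> s)"] by (simp add: Phi_inv_def wdrop_def)
  then show ?thesis
    unfolding CS_top_def[of] cantor_top_def
    by (simp add: continuous_map_componentwise_UNIV CS_top_def[symmetric])
qed

lemma cont_Phi: "continuous_map (CS_top :: 'a cpt topology) CS_top (Phi \<psi>)"
proof -
  have "continuous_map (CS_top :: 'a cpt topology) (discrete_topology UNIV) (\<lambda>\<kappa>. Phi \<psi> \<kappa> s i)" for s i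
  proof (cases "i < length (\<psi> s)")
    case True
    then show ?thesis by (simp add: Phi_def wcat_def)
  next
    case False
    then show ?thesis using proj_cont[of s "i - length (\<psi> s)"] by (simp add: Phi_def wcat_def)
  qed
  then show ?thesis
    unfolding CS_top_def[of] cantor_top_def
    by (simp add: continuous_map_componentwise_UNIV CS_top_def[symmetric])
qed

lemma open_bset: assumes "valid_brick m b" shows "openin (cubes m :: (nat \<times> 'a cpt) topology) (bset b)"
  unfolding cubes_def openin_sum_topology
proof (intro conjI ballI)
  show "bset b \<subseteq> Sigma {..<m} (topspace \<circ> (\<lambda>_. CS_top))"
    using assms by (auto simp: bset_def valid_brick_def)
next
  fix i assume "i \<in> {..<m}"
  show "openin CS_top {x. (i, x) \<in> bset b}"
  proof (cases "i = fst b")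
    case True
    then have "{x. (i, x) \<in> bset b} = brick (snd b)" by (auto simp: bset_def)
    moreover have "fin_supp (snd b)" using assms by (simp add: valid_brick_def)
    ultimately show ?thesis using open_brick[of "snd b"] by simp
  next
    case False
    then have "{x. (i, x) \<in> bset b} = {}" by (auto simp: bset_def)
    then show ?thesis by simp
  qed
qed

definition fmap :: "nat \<Rightarrow> nat \<Rightarrow> (nat \<Rightarrow> 'a bdesc) \<Rightarrow> 'a cmap" where
  "fmap m n B = restrict (\<lambda>x. let j = (SOME j. j < n \<and> x \<in> bset (B j)) in (j, Phi_inv (snd (B j)) (snd x))) (carr m)"

definition finv :: "nat \<Rightarrow> (nat \<Rightarrow> 'a bdesc) \<Rightarrow> 'a cmap" where
  "finv n B = restrict (\<lambda>y. (fst (B (fst y)), Phi (snd (B (fst y))) (snd y))) (carr n)"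

locale bpart =
  fixes m n :: nat and B :: "nat \<Rightarrow> 'a bdesc"
  assumes bp: "brick_partition m (B ` {..<n})" and binj: "inj_on B {..<n}"
begin

lemma valid: "j < n \<Longrightarrow> valid_brick m (B j)"
  using bp_valid[OF bp] by blast

lemma uniq: "j < n \<Longrightarrow> j' < n \<Longrightarrow> x \<in> bset (B j) \<Longrightarrow> x \<in> bset (B j') \<Longrightarrow> j = j'"
  using bp_unique[OF bp] binj by (metis imageI inj_onD lessThan_iff)

lemma cover: "x \<in> carr m \<Longrightarrow> \<exists>j<n. x \<in> bset (B j)"
  using bp_cover[OF bp] by blast

lemma insub: "j < n \<Longrightarrow> x \<in> bset (B j) \<Longrightarrow> x \<in> carr m"
  using bset_sub_carr valid by blast

lemma fmap_eq: assumes "j < n" "x \<in> bset (B j)"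
  shows "fmap m n B x = (j, Phi_inv (snd (B j)) (snd x))"
proof -
  have "(SOME j. j < n \<and> x \<in> bset (B j)) = j"
    by (rule some_equality) (simp add: assms, meson assms uniq)
  then show ?thesis using assms insub by (simp add: fmap_def Let_def)
qed

lemma fmap_in: "x \<in> carr m \<Longrightarrow> fmap m n B x \<in> carr n"
  using cover fmap_eq by fastforce

lemma finv_eq: "j < n \<Longrightarrow> finv n B (j, \<kappa>) = (fst (B j), Phi (snd (B j)) \<kappa>)"
  by (simp add: finv_def)

lemma finv_in_bset: "j < n \<Longrightarrow> finv n B (j, \<kappa>) \<in> bset (B j)"
  by (simp add: finv_eq bset_def)

lemma inv1: "x \<in> carr m \<Longrightarrow> finv n B (fmap m n B x) = x"
proof -
  assume x: "x \<in> carr m"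
  then obtain j where j: "j < n" "x \<in> bset (B j)" using cover by blast
  then have "fst x = fst (B j)" "snd x \<in> brick (snd (B j))" by (auto simp: bset_def)
  then show ?thesis using j by (simp add: fmap_eq finv_eq Phi_Phi_inv prod_eq_iff)
qed

lemma inv2: "y \<in> carr n \<Longrightarrow> fmap m n B (finv n B y) = y"
proof -
  assume y: "y \<in> carr n"
  obtain j \<kappa> where "y = (j, \<kappa>)" by (cases y)
  with y have j: "j < n" "y = (j, \<kappa>)" by auto
  have "fmap m n B (finv n B y) = (j, Phi_inv (snd (B j)) (snd (finv n B (j, \<kappa>))))"
    using fmap_eq[OF j(1) finv_in_bset[OF j(1)]] j by simp
  then show ?thesis using j by (simp add: finv_eq)
qed

lemma fmap_cont: "continuous_map (cubes m) (cubes n) (fmap m n B)"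
  unfolding continuous_map_def
proof (intro conjI allI impI)
  show "fmap m n B \<in> topspace (cubes m) \<rightarrow> topspace (cubes n)" using fmap_in by auto
next
  fix U :: "(nat \<times> 'a cpt) set" assume U: "openin (cubes n) U"
  have eq: "{x \<in> topspace (cubes m). fmap m n B x \<in> U} =
        (\<Union>j\<in>{..<n}. bset (B j) \<inter> {x \<in> carr m. (j, Phi_inv (snd (B j)) (snd x)) \<in> U})"
  proof
    show "{x \<in> topspace (cubes m). fmap m n B x \<in> U} \<subseteq> (\<Union>j\<in>{..<n}. bset (B j) \<inter> {x \<in> carr m. (j, Phi_inv (snd (B j)) (snd x)) \<in> U})"
    proof
      fix x assume "x \<in> {x \<in> topspace (cubes m). fmap m n B x \<in> U}"
      then have x: "x \<in> carr m" "fmap m n B x \<in> U" by auto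
      obtain j where "j < n" "x \<in> bset (B j)" using cover x(1) by blast
      then show "x \<in> (\<Union>j\<in>{..<n}. bset (B j) \<inter> {x \<in> carr m. (j, Phi_inv (snd (B j)) (snd x)) \<in> U})"
        using x fmap_eq by auto
    qed
  next
    show "(\<Union>j\<in>{..<n}. bset (B j) \<inter> {x \<in> carr m. (j, Phi_inv (snd (B j)) (snd x)) \<in> U}) \<subseteq> {x \<in> topspace (cubes m). fmap m n B x \<in> U}"
      using fmap_eq by auto
  qed
  have "openin (cubes m) (bset (B j) \<inter> {x \<in> carr m. (j, Phi_inv (snd (B j)) (snd x)) \<in> U})" if j: "j < n" for j
  proof (rule openin_Int)
    show "openin (cubes m) (bset (B j))" using open_bset valid j by blast
    have oU: "openin CS_top {\<kappa>. (j, \<kappa>) \<in> U}" using U j unfolding cubes_def openin_sum_topology by auto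
    have "openin CS_top {\<kappa> \<in> topspace CS_top. Phi_inv (snd (B j)) \<kappa> \<in> {\<kappa>. (j, \<kappa>) \<in> U}}"
      by (rule openin_continuous_map_preimage[OF cont_Phi_inv oU])
    then have o2: "openin CS_top {\<kappa>. (j, Phi_inv (snd (B j)) \<kappa>) \<in> U}" by simp
    show "openin (cubes m) {x \<in> carr m. (j, Phi_inv (snd (B j)) (snd x)) \<in> U}"
      unfolding cubes_def openin_sum_topology
      using o2 by (auto simp: carr_def)
  qed
  then show "openin (cubes m) {x \<in> topspace (cubes m). fmap m n B x \<in> U}"
    unfolding eq by (intro openin_Union) auto
qed

lemma finv_cont: "continuous_map (cubes n) (cubes m) (finv n B)"
  unfolding continuous_map_def
proof (intro conjI allI impI)
  show "finv n B \<in> topspace (cubes n) \<rightarrow> topspace (cubes m)"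
  proof
    fix y :: "nat \<times> 'a cpt" assume "y \<in> topspace (cubes n)"
    then obtain j \<kappa> where j: "j < n" "y = (j, \<kappa>)" by (cases y) auto
    then show "finv n B y \<in> topspace (cubes m)" using finv_in_bset[OF j(1)] insub[OF j(1)] by simp
  qed
next
  fix U :: "(nat \<times> 'a cpt) set" assume U: "openin (cubes m) U"
  show "openin (cubes n) {x \<in> topspace (cubes n). finv n B x \<in> U}"
    unfolding cubes_def openin_sum_topology
  proof (intro conjI ballI)
    show "{x \<in> topspace (sum_topology (\<lambda>_. CS_top) {..<n}). finv n B x \<in> U} \<subseteq> Sigma {..<n} (topspace \<circ> (\<lambda>_. CS_top))"
      by auto
  next
    fix j assume j: "j \<in> {..<n}"
    have fj: "fst (B j) < m" using valid j by (simp add: valid_brick_def)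
    have oU: "openin CS_top {\<kappa>. (fst (B j), \<kappa>) \<in> U}" using U fj unfolding cubes_def openin_sum_topology by auto
    have "openin CS_top {\<kappa> \<in> topspace CS_top. Phi (snd (B j)) \<kappa> \<in> {\<kappa>. (fst (B j), \<kappa>) \<in> U}}"
      by (rule openin_continuous_map_preimage[OF cont_Phi oU])
    then show "openin CS_top {x. (j, x) \<in> {x \<in> topspace (sum_topology (\<lambda>_. CS_top) {..<n}). finv n B x \<in> U}}"
      using j by (simp add: finv_eq)
  qed
qed

lemma fmap_homeo: "homeomorphic_map (cubes m) (cubes n) (fmap m n B)"
proof -
  have "homeomorphic_maps (cubes m) (cubes n) (fmap m n B) (finv n B)"
    unfolding homeomorphic_maps_def using fmap_cont finv_cont inv1 inv2 by simp
  then show ?thesis by (rule homeomorphic_maps_imp_map)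
qed

lemma fmap_ext: "fmap m n B \<in> extensional (carr m)"
  by (simp add: fmap_def)

end

lemma fmap_forest:
  assumes "dyadic_partition m (B ` {..<n})" "inj_on B {..<n}"
  shows "mc_forest_via m n (fmap m n B) B"
proof -
  interpret bpart m n B using assms dyadic_bp by unfold_locales auto
  show ?thesis unfolding mc_forest_via_def using fmap_homeo fmap_ext assms fmap_eq by blast
qed



lemma forest_bpart: "mc_forest_via m n f B \<Longrightarrow> bpart m n B"
  unfolding mc_forest_via_def using dyadic_bp by unfold_locales auto

lemma forest_val: "mc_forest_via m n f B \<Longrightarrow> j < n \<Longrightarrow> x \<in> bset (B j) \<Longrightarrow> f x = (j, Phi_inv (snd (B j)) (snd x))"
  unfolding mc_forest_via_def by blast

lemma forest_homeo: "mc_forest_via m n f B \<Longrightarrow> homeomorphic_map (cubes m) (cubes n) f"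
  unfolding mc_forest_via_def by blast

lemma forest_ext: "mc_forest_via m n f B \<Longrightarrow> f \<in> extensional (carr m)"
  unfolding mc_forest_via_def by blast

lemma homeo_in: "homeomorphic_map (cubes m) (cubes n) f \<Longrightarrow> x \<in> carr m \<Longrightarrow> f x \<in> (carr n :: (nat \<times> 'a cpt) set)"
  for f :: "'a cmap"
  using homeomorphic_imp_surjective_map[of "cubes m" "cubes n" f] by auto

lemma homeo_inj: "homeomorphic_map (cubes m) (cubes n) f \<Longrightarrow> inj_on f (carr m :: (nat \<times> 'a cpt) set)"
  for f :: "'a cmap"
  using homeomorphic_imp_injective_map[of "cubes m" "cubes n" f] by auto

lemma homeo_surj: "homeomorphic_map (cubes m) (cubes n) f \<Longrightarrow> f ` carr m = (carr n :: (nat \<times> 'a cpt) set)"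
  for f :: "'a cmap"
  using homeomorphic_imp_surjective_map[of "cubes m" "cubes n" f] by auto

lemma forest_loc:
  assumes F: "mc_forest_via m n f B" and x: "x \<in> carr m"
  shows "\<exists>j<n. x \<in> bset (B j) \<and> fst (f x) = j"
proof -
  interpret bpart m n B using forest_bpart[OF F] .
  obtain j where "j < n" "x \<in> bset (B j)" using cover x by blast
  then show ?thesis using forest_val[OF F] by auto
qed

lemma forest_fiber:
  assumes F: "mc_forest_via m n f B" and x: "x \<in> carr m" and j: "j < n"
  shows "fst (f x) = j \<longleftrightarrow> x \<in> bset (B j)"
proof
  assume "fst (f x) = j"
  then show "x \<in> bset (B j)" using forest_loc[OF F x] by blast
next
  assume "x \<in> bset (B j)"
  then show "fst (f x) = j" using forest_val[OF F j] by simp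
qed

lemma forest_same:
  assumes F: "mc_forest_via m n f B" and x: "x \<in> carr m" and y: "y \<in> carr m"
  shows "fst (f x) = fst (f y) \<longleftrightarrow> (\<exists>j<n. x \<in> bset (B j) \<and> y \<in> bset (B j))"
proof
  assume "fst (f x) = fst (f y)"
  then show "\<exists>j<n. x \<in> bset (B j) \<and> y \<in> bset (B j)"
    using forest_loc[OF F x] forest_fiber[OF F y] by metis
next
  assume "\<exists>j<n. x \<in> bset (B j) \<and> y \<in> bset (B j)"
  then obtain j where "j < n" "x \<in> bset (B j)" "y \<in> bset (B j)" by blast
  then show "fst (f x) = fst (f y)" using forest_fiber[OF F x] forest_fiber[OF F y] by blast
qed

lemma forest_fst_inj:
  assumes F: "mc_forest_via m n f B" and x: "x \<in> carr m" and y: "y \<in> carr m"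
    and "fst (f x) = fst (f y)"
  shows "fst x = fst y"
proof -
  obtain j where "x \<in> bset (B j)" "y \<in> bset (B j)" using forest_same[OF F x y] assms(4) by blast
  then show ?thesis by (auto simp: bset_def)
qed

lemma forest_n_pos: "mc_forest_via m n f B \<Longrightarrow> 1 \<le> m \<Longrightarrow> 1 \<le> n"
proof -
  assume F: "mc_forest_via m n f B" "1 \<le> m"
  have "((0::nat), (\<lambda>_ _. False) :: 'a cpt) \<in> carr m" using F(2) by simp
  then show ?thesis using forest_loc[OF F(1)] by fastforce
qed

lemma perm_subgroupD: "perm_subgroup G \<Longrightarrow> id \<in> G" "perm_subgroup G \<Longrightarrow> g \<in> G \<Longrightarrow> bij g"
  by (auto simp: perm_subgroup_def)

lemma twist_id: "twist \<psi> (\<lambda>_. []) id = Phi_inv \<psi>"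
  by (auto simp: twist_def Phi_def wcat_def tau_def)

lemma forest_SV:
  assumes F: "mc_forest_via m n f B" and G: "perm_subgroup G" and m: "1 \<le> m"
  shows "SV G m n f"
proof -
  interpret bpart m n B using forest_bpart[OF F] .
  have n: "1 \<le> n" using forest_n_pos[OF F m] .
  have disj: "bset (B j) \<inter> bset (B j') = {}" if "j < n" "j' < n" "j \<noteq> j'" for j j'
    using uniq that by blast
  have cov: "(\<Union>j<n. bset (B j)) = carr m" using cover insub by blast
  have cov2: "(\<Union>j<n. bset ((j, \<lambda>_. []) :: 'a bdesc)) = carr n" by auto
  have c1: "\<forall>j<n. valid_brick m (B j) \<and> valid_brick n ((\<lambda>j. (j, \<lambda>_. [])) j :: 'a bdesc) \<and> (\<lambda>_. id) j \<in> G"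
    using valid perm_subgroupD(1)[OF G] by (simp add: valid_brick_def fin_supp_def)
  have c2: "\<forall>j<n. \<forall>j'<n. j \<noteq> j' \<longrightarrow> bset (B j) \<inter> bset (B j') = {} \<and> bset ((\<lambda>j. (j, \<lambda>_. [])) j :: 'a bdesc) \<inter> bset ((\<lambda>j. (j, \<lambda>_. [])) j') = {}"
    using disj by auto
  have c3: "\<forall>j<n. \<forall>x\<in>bset (B j). f x = (fst ((\<lambda>j. (j, \<lambda>_. [])) j :: 'a bdesc), twist (snd (B j)) (snd ((\<lambda>j. (j, \<lambda>_. [])) j :: 'a bdesc)) ((\<lambda>_. id) j) (snd x))"
    using forest_val[OF F] by (simp add: twist_id)
  show ?thesis unfolding SV_def
    apply (intro conjI m n forest_homeo[OF F] forest_ext[OF F])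
    apply (rule exI[of _ n], rule exI[of _ B], rule exI[of _ "\<lambda>j. (j, \<lambda>_. [])"], rule exI[of _ "\<lambda>_. id"])
    using c1 c2 c3 cov cov2 by blast
qed

lemma tau_inj: "bij g \<Longrightarrow> tau g k1 = tau g k2 \<Longrightarrow> k1 = k2"
proof
  fix s assume b: "bij g" and e: "tau g k1 = tau g k2"
  have "k1 (inv g (g s)) = k2 (inv g (g s))" using e by (simp add: tau_def fun_eq_iff)
  then show "k1 s = k2 s" using b by (simp add: bij_def)
qed

lemma twperm_props:
  assumes G: "perm_subgroup G" and p: "p \<in> twisted_perms G n"
  shows "\<exists>\<sigma>. inj \<sigma> \<and> (\<forall>y\<in>carr n. p y \<in> carr n \<and> fst (p y) = \<sigma> (fst y)) \<and> inj_on p (carr n)"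
proof -
  obtain \<sigma> \<gamma> where p: "p = twperm n \<sigma> \<gamma>" "\<sigma> permutes {..<n}" "\<forall>i<n. \<gamma> i \<in> G"
    using p unfolding twisted_perms_def by blast
  have inj: "inj \<sigma>" using p(2) by (rule permutes_inj)
  have sn: "\<And>i. i < n \<Longrightarrow> \<sigma> i < n" using permutes_in_image[OF p(2)] by simp
  have in1: "\<forall>y\<in>carr n. p y \<in> carr n \<and> fst (p y) = \<sigma> (fst y)"
  proof
    fix y :: "nat \<times> 'a cpt" assume y: "y \<in> carr n"
    obtain i k where yi: "y = (i, k)" by (cases y)
    have "p y = (\<sigma> i, tau (\<gamma> (\<sigma> i)) k)" using y yi by (simp add: p(1) twperm_def)
    then show "p y \<in> carr n \<and> fst (p y) = \<sigma> (fst y)" using sn y yi by simp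
  qed
  have "inj_on p (carr n)"
  proof
    fix y z assume y: "y \<in> carr n" and z: "z \<in> carr n" and e: "p y = p z"
    obtain i k where yi: "y = (i, k)" by (cases y)
    obtain i' k' where zi: "z = (i', k')" by (cases z)
    have "\<sigma> i = \<sigma> i'" "tau (\<gamma> (\<sigma> i)) k = tau (\<gamma> (\<sigma> i')) k'"
      using e y z yi zi p(1) by (auto simp: twperm_def)
    then have ii: "i = i'" using inj by (simp add: inj_on_def)
    have "\<sigma> i < n" using y yi sn by simp
    then have "bij (\<gamma> (\<sigma> i))" using p(3) G perm_subgroupD(2) by blast
    then have "k = k'" using tau_inj \<open>tau (\<gamma> (\<sigma> i)) k = tau (\<gamma> (\<sigma> i')) k'\<close> ii by blast
    then show "y = z" using yi zi ii by simp
  qed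
  then show ?thesis using inj in1 by blast
qed

lemma twperm_id: "perm_subgroup G \<Longrightarrow> twperm n id (\<lambda>_. id) \<in> twisted_perms G n"
proof -
  assume "perm_subgroup G"
  then have "id \<in> G" by (rule perm_subgroupD(1))
  then have "id permutes {..<n} \<and> (\<forall>i<n. (\<lambda>_. id) i \<in> G)" by (simp add: permutes_id)
  then show ?thesis unfolding twisted_perms_def by blast
qed

lemma self_cls:
  assumes G: "perm_subgroup G" and h: "h \<in> extensional (carr m)" "\<And>x. x \<in> carr m \<Longrightarrow> h x \<in> (carr n :: (nat \<times> 'a cpt) set)"
  shows "h \<in> cls G m n h"
proof -
  have "compose (carr m) (twperm n id (\<lambda>_. id)) h = h"
  proof
    fix x show "compose (carr m) (twperm n id (\<lambda>_. id)) h x = h x"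
    proof (cases "x \<in> carr m")
      case True
      obtain i k where hx: "h x = (i, k)" by (cases "h x")
      have hn: "h x \<in> carr n" using h(2)[OF True] .
      have tid: "tau id k = k" unfolding tau_def inv_id by simp
      have "compose (carr m) (twperm n id (\<lambda>_. id)) h x = twperm n id (\<lambda>_. id) (h x)"
        using True by (rule compose_eq)
      also have "\<dots> = (i, tau id k)"
      proof -
        have "i < n" using hn hx by simp
        then have "twperm n id (\<lambda>_. id) (i, k) = (i, tau id k)" unfolding twperm_def by simp
        then show ?thesis using hx by simp
      qed
      finally show ?thesis using hx tid by simp
    next
      case False
      have "h x = undefined" using h(1) False by (rule extensional_arb)
      moreover have "compose (carr m) (twperm n id (\<lambda>_. id)) h x = undefined"
        using False unfolding compose_def by simp
      ultimately show ?thesis by simp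
    qed
  qed
  then show ?thesis unfolding cls_def using twperm_id[OF G] by (metis (mono_tags, lifting) mem_Collect_eq)
qed

lemma ext_inj_le:
  assumes "h \<in> extensional (carr a)" "inj_on h (carr b :: (nat \<times> 'a cpt) set)"
  shows "b \<le> a"
proof (rule ccontr)
  assume "\<not> b \<le> a"
  then have ab: "a < b" by simp
  define F :: "'a cpt" where "F = (\<lambda>_ _. False)"
  define T :: "'a cpt" where "T = (\<lambda>_ _. True)"
  have i1: "(a, F) \<in> carr b" "(a, T) \<in> carr b" using ab by simp_all
  have n1: "(a, F) \<notin> carr a" "(a, T) \<notin> carr a" by simp_all
  have "h (a, F) = undefined" using extensional_arb[OF assms(1) n1(1)] .
  moreover have "h (a, T) = undefined" using extensional_arb[OF assms(1) n1(2)] .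
  ultimately have "h (a, F) = h (a, T)" by simp
  then have "(a, F) = (a, T)" using inj_onD[OF assms(2) _ i1] by blast
  then have "F = T" by simp
  then have "F undefined 0 = T undefined 0" by simp
  then show False by (simp add: F_def T_def)
qed

lemma cls_mem:
  assumes "h \<in> cls G m n f"
  shows "\<exists>p. p \<in> twisted_perms G n \<and> h = compose (carr m) p f"
  using assms unfolding cls_def by blast

lemma refine_of_le:
  assumes G: "perm_subgroup G"
    and le: "cls_le G (cls G m n1 f1) (cls G m n2 f2)"
    and h1: "homeomorphic_map (cubes m) (cubes n1) f1" "f1 \<in> extensional (carr m)"
    and h2: "homeomorphic_map (cubes m) (cubes n2) f2" "f2 \<in> extensional (carr m)"
    and x: "x \<in> carr m" and y: "y \<in> carr m" and e: "fst (f2 x) = fst (f2 y)"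
  shows "fst (f1 x) = fst (f1 y)"
proof -
  obtain m' n n' h f where SV: "SV G m' n h" and mf: "mc_forest n n' f"
    and c1: "cls G m n1 f1 = cls G m' n h"
    and c2: "cls G m n2 f2 = cls G m' n' (compose (carr m') f h)"
    using le unfolding cls_le_def by blast
  obtain B where F: "mc_forest_via n n' f B" using mf unfolding mc_forest_def by blast
  have hh: "homeomorphic_map (cubes m') (cubes n) h" "h \<in> extensional (carr m')"
    using SV unfolding SV_def by auto
  have "h \<in> cls G m' n h" using self_cls[OF G hh(2)] homeo_in[OF hh(1)] by blast
  then have "h \<in> cls G m n1 f1" using c1 by simp
  then obtain p where p: "p \<in> twisted_perms G n1" "h = compose (carr m) p f1" using cls_mem by blast
  obtain \<sigma> where \<sigma>: "inj \<sigma>" "\<forall>y\<in>carr n1. p y \<in> carr n1 \<and> fst (p y) = \<sigma> (fst y)" "inj_on p (carr n1)"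
    using twperm_props[OF G p(1)] by blast
  have "h \<in> extensional (carr m)" using p(2) by (simp add: compose_def)
  moreover have "inj_on h (carr m)"
  proof -
    have "inj_on (p \<circ> f1) (carr m)"
      using comp_inj_on[OF homeo_inj[OF h1(1)]] \<sigma>(3) homeo_surj[OF h1(1)] by simp
    then show ?thesis using p(2) by (simp add: inj_on_def compose_def)
  qed
  ultimately have mm: "m' = m" using ext_inj_le hh homeo_inj le_antisym by blast
  have "f2 \<in> cls G m n2 f2" using self_cls[OF G h2(2)] homeo_in[OF h2(1)] by blast
  then have "f2 \<in> cls G m n' (compose (carr m) f h)" using c2 mm by simp
  then obtain q where q: "q \<in> twisted_perms G n'" "f2 = compose (carr m) q (compose (carr m) f h)"
    using cls_mem by blast
  obtain \<tau> where \<tau>: "inj \<tau>" "\<forall>y\<in>carr n'. q y \<in> carr n' \<and> fst (q y) = \<tau> (fst y)"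
    using twperm_props[OF G q(1)] by blast
  have hf: "homeomorphic_map (cubes n) (cubes n') f" using forest_homeo[OF F] .
  have hm: "homeomorphic_map (cubes m) (cubes n) h" using hh mm by simp
  have hz: "h z = p (f1 z)" if "z \<in> carr m" for z
    using p(2) compose_eq[OF that] by simp
  have fz: "f2 z = q (f (h z))" if "z \<in> carr m" for z
    using q(2) compose_eq[OF that, of q] compose_eq[OF that, of f h] by simp
  have hin: "h z \<in> carr n" if "z \<in> carr m" for z using homeo_in[OF hm that] .
  have fin: "f (h z) \<in> carr n'" if "z \<in> carr m" for z using homeo_in[OF hf hin[OF that]] .
  have "\<tau> (fst (f (h x))) = \<tau> (fst (f (h y)))"
    using e fz[OF x] fz[OF y] \<tau>(2) fin[OF x] fin[OF y] by simp
  then have "fst (f (h x)) = fst (f (h y))" using \<tau>(1) by (simp add: inj_on_def)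
  then have "fst (h x) = fst (h y)" using forest_fst_inj[OF F hin[OF x] hin[OF y]] by blast
  then have "fst (p (f1 x)) = fst (p (f1 y))" using hz[OF x] hz[OF y] by simp
  moreover have "f1 x \<in> carr n1" "f1 y \<in> carr n1" using homeo_in[OF h1(1)] x y by auto
  ultimately have "\<sigma> (fst (f1 x)) = \<sigma> (fst (f1 y))" using \<sigma>(2) by simp
  then show ?thesis using \<sigma>(1) by (simp add: inj_on_def)
qed



definition wdropw :: "('a \<Rightarrow> bool list) \<Rightarrow> ('a \<Rightarrow> bool list) \<Rightarrow> ('a \<Rightarrow> bool list)" where
  "wdropw \<phi> \<zeta> = (\<lambda>s. drop (length (\<phi> s)) (\<zeta> s))"

lemma Phi_inv_comp:
  assumes "brick \<zeta> \<subseteq> brick \<phi>"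
  shows "Phi_inv (wdropw \<phi> \<zeta>) (Phi_inv \<phi> \<kappa>) = Phi_inv \<zeta> \<kappa>"
proof -
  have L: "length (\<phi> s) \<le> length (\<zeta> s)" for s using assms unfolding brick_subset_iff by blast
  show ?thesis
  proof (rule ext, rule ext)
    fix s i
    have "i + (length (\<zeta> s) - length (\<phi> s)) + length (\<phi> s) = i + length (\<zeta> s)" using L[of s] by simp
    then show "Phi_inv (wdropw \<phi> \<zeta>) (Phi_inv \<phi> \<kappa>) s i = Phi_inv \<zeta> \<kappa> s i"
      by (simp add: Phi_inv_def wdrop_def wdropw_def)
  qed
qed

lemma Phi_inv_image:
  assumes "brick \<zeta> \<subseteq> brick \<phi>"
  shows "Phi_inv \<phi> ` brick \<zeta> = brick (wdropw \<phi> \<zeta>)"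
proof -
  have H: "length (\<phi> s) \<le> length (\<zeta> s) \<and> \<phi> s = take (length (\<phi> s)) (\<zeta> s)" for s
    using assms unfolding brick_subset_iff by blast
  show ?thesis
  proof
    show "Phi_inv \<phi> ` brick \<zeta> \<subseteq> brick (wdropw \<phi> \<zeta>)"
    proof
      fix k' assume "k' \<in> Phi_inv \<phi> ` brick \<zeta>"
      then obtain \<kappa> where k: "\<kappa> \<in> brick \<zeta>" "k' = Phi_inv \<phi> \<kappa>" by blast
      have "is_prefix (wdropw \<phi> \<zeta> s) (k' s)" for s
      proof -
        have p: "is_prefix (\<zeta> s) (\<kappa> s)" using k(1) by (simp add: brick_def)
        show ?thesis unfolding is_prefix_def
        proof (intro allI impI)
          fix i assume "i < length (wdropw \<phi> \<zeta> s)"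
          then have i: "i + length (\<phi> s) < length (\<zeta> s)" by (simp add: wdropw_def)
          have "k' s i = \<kappa> s (i + length (\<phi> s))" using k(2) by (simp add: Phi_inv_def wdrop_def)
          also have "\<dots> = \<zeta> s ! (i + length (\<phi> s))" using p i by (simp add: is_prefix_def)
          also have "\<dots> = wdropw \<phi> \<zeta> s ! i" using H[of s] by (simp add: wdropw_def add.commute)
          finally show "k' s i = wdropw \<phi> \<zeta> s ! i" .
        qed
      qed
      then show "k' \<in> brick (wdropw \<phi> \<zeta>)" by (simp add: brick_def)
    qed
  next
    show "brick (wdropw \<phi> \<zeta>) \<subseteq> Phi_inv \<phi> ` brick \<zeta>"
    proof
      fix k' assume k': "k' \<in> brick (wdropw \<phi> \<zeta>)"
      have "Phi \<phi> k' \<in> brick \<zeta>"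
      proof -
        have "is_prefix (\<zeta> s) (Phi \<phi> k' s)" for s
          unfolding is_prefix_def
        proof (intro allI impI)
          fix i assume i: "i < length (\<zeta> s)"
          show "Phi \<phi> k' s i = \<zeta> s ! i"
          proof (cases "i < length (\<phi> s)")
            case True
            then have "Phi \<phi> k' s i = \<phi> s ! i" by (simp add: Phi_def wcat_def)
            also have "\<dots> = \<zeta> s ! i" using H[of s] True by (metis nth_take)
            finally show ?thesis .
          next
            case False
            then have "Phi \<phi> k' s i = k' s (i - length (\<phi> s))" by (simp add: Phi_def wcat_def)
            also have "\<dots> = wdropw \<phi> \<zeta> s ! (i - length (\<phi> s))"
              using k' False i by (simp add: brick_def is_prefix_def wdropw_def)
            also have "\<dots> = \<zeta> s ! i" using False H[of s] by (simp add: wdropw_def)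
            finally show ?thesis .
          qed
        qed
        then show ?thesis by (simp add: brick_def)
      qed
      moreover have "k' = Phi_inv \<phi> (Phi \<phi> k')" by simp
      ultimately show "k' \<in> Phi_inv \<phi> ` brick \<zeta>" by blast
    qed
  qed
qed

lemma bset_sub_brick: "bset c \<subseteq> bset q \<Longrightarrow> fst c = fst q \<and> brick (snd c) \<subseteq> brick (snd q)"
proof -
  assume H: "bset c \<subseteq> bset q"
  then have e: "fst c = fst q" using bset_nonempty[of c] by (auto simp: bset_def)
  then have "brick (snd c) \<subseteq> brick (snd q)" using H by (auto simp: bset_def)
  then show ?thesis using e by simp
qed

lemma bset_pair: "bset c = Pair (fst c) ` brick (snd c)"
  by (auto simp: bset_def)



lemma le_of_refine:
  assumes G: "perm_subgroup G" and m1: "1 \<le> m"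
    and F1: "mc_forest_via m n1 f1 B1" and Fg: "mc_forest_via m n g Bg"
    and R: "\<forall>x\<in>carr m. \<forall>y\<in>carr m. fst (g x) = fst (g y) \<longrightarrow> fst (f1 x) = fst (f1 y)"
  shows "cls_le G (cls G m n1 f1) (cls G m n g)"
proof -
  interpret b1: bpart m n1 B1 using forest_bpart[OF F1] .
  interpret bg: bpart m n Bg using forest_bpart[OF Fg] .
  have h1: "homeomorphic_map (cubes m) (cubes n1) f1" using forest_homeo[OF F1] .
  have hg: "homeomorphic_map (cubes m) (cubes n) g" using forest_homeo[OF Fg] .
  obtain f1i where hm: "homeomorphic_maps (cubes m) (cubes n1) f1 f1i"
    using h1 homeomorphic_map_maps by blast
  have hi: "homeomorphic_map (cubes n1) (cubes m) f1i" using hm homeomorphic_maps_map by blast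
  have inv1: "\<And>x. x \<in> carr m \<Longrightarrow> f1i (f1 x) = x" using hm by (simp add: homeomorphic_maps_def)
  have inv2: "\<And>y. y \<in> carr n1 \<Longrightarrow> f1 (f1i y) = y" using hm by (simp add: homeomorphic_maps_def)
  define f' where "f' = restrict (\<lambda>y. g (f1i y)) (carr n1)"
  have hf': "homeomorphic_map (cubes n1) (cubes n) f'"
    using homeomorphic_map_eq[OF homeomorphic_map_compose[OF hi hg], of f'] by (simp add: f'_def)
  have ext': "f' \<in> extensional (carr n1)" by (simp add: f'_def)
  have comp: "compose (carr m) f' f1 = g"
  proof
    fix x show "compose (carr m) f' f1 x = g x"
    proof (cases "x \<in> carr m")
      case True
      have "f1 x \<in> carr n1" using homeo_in[OF h1 True] .
      then show ?thesis using True inv1[OF True] by (simp add: compose_eq f'_def)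
    next
      case False
      have "g x = undefined" using extensional_arb[OF forest_ext[OF Fg] False] .
      then show ?thesis using False by (simp add: compose_def)
    qed
  qed
  have cont: "\<exists>i<n1. bset (Bg j) \<subseteq> bset (B1 i)" if j: "j < n" for j
  proof -
    obtain x0 where x0: "x0 \<in> bset (Bg j)" using bset_nonempty by blast
    have x0m: "x0 \<in> carr m" using bg.insub[OF j x0] .
    obtain i where i: "i < n1" "x0 \<in> bset (B1 i)" "fst (f1 x0) = i" using forest_loc[OF F1 x0m] by blast
    have "bset (Bg j) \<subseteq> bset (B1 i)"
    proof
      fix x assume x: "x \<in> bset (Bg j)"
      have xm: "x \<in> carr m" using bg.insub[OF j x] .
      have "fst (g x) = fst (g x0)" using forest_fiber[OF Fg xm j] forest_fiber[OF Fg x0m j] x x0 by simp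
      then have "fst (f1 x) = i" using R xm x0m i(3) by blast
      then show "x \<in> bset (B1 i)" using forest_fiber[OF F1 xm i(1)] by simp
    qed
    then show ?thesis using i(1) by blast
  qed
  define idx where "idx j = (SOME i. i < n1 \<and> bset (Bg j) \<subseteq> bset (B1 i))" for j
  have idx: "idx j < n1" "bset (Bg j) \<subseteq> bset (B1 (idx j))" if "j < n" for j
    using someI_ex[OF cont[OF that]] unfolding idx_def by blast+
  define E :: "'a bdesc \<Rightarrow> 'a bdesc \<Rightarrow> 'a bdesc" where
    "E q c = (inv_into {..<n1} B1 q, wdropw (snd q) (snd c))" for q c
  have Eprop: "valid_brick n1 (E q c) \<and> bset (E q c) = f1 ` bset c"
    if q: "q \<in> B1 ` {..<n1}" and c: "valid_brick m c" "bset c \<subseteq> bset q" for q c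
  proof -
    obtain i where i: "i < n1" "q = B1 i" using q by blast
    have ii: "inv_into {..<n1} B1 q = i" using i b1.binj by (simp add: inv_into_f_f)
    have sb: "fst c = fst q" "brick (snd c) \<subseteq> brick (snd q)" using bset_sub_brick[OF c(2)] by auto
    have fs: "finite {s. snd c s \<noteq> []}" using c(1) by (simp add: valid_brick_def fin_supp_def)
    have "{s. wdropw (snd q) (snd c) s \<noteq> []} \<subseteq> {s. snd c s \<noteq> []}" by (auto simp: wdropw_def)
    then have "fin_supp (wdropw (snd q) (snd c))" using fs by (simp add: fin_supp_def finite_subset)
    then have v: "valid_brick n1 (E q c)" using i ii by (simp add: E_def valid_brick_def)
    have "f1 ` bset c = (\<lambda>\<kappa>. (i, Phi_inv (snd q) \<kappa>)) ` brick (snd c)"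
    proof -
      have "f1 (fst c, \<kappa>) = (i, Phi_inv (snd q) \<kappa>)" if "\<kappa> \<in> brick (snd c)" for \<kappa>
      proof -
        have "(fst c, \<kappa>) \<in> bset q" using c(2) that by (auto simp: bset_def)
        then show ?thesis using forest_val[OF F1 i(1)] i(2) by simp
      qed
      then show ?thesis by (force simp: bset_pair[of c])
    qed
    also have "\<dots> = Pair i ` (Phi_inv (snd q) ` brick (snd c))" by (simp add: image_image)
    also have "\<dots> = Pair i ` brick (wdropw (snd q) (snd c))" using Phi_inv_image[OF sb(2)] by simp
    also have "\<dots> = bset (E q c)" by (simp add: E_def ii bset_pair)
    finally show ?thesis using v by simp
  qed
  have f1inj: "inj_on f1 (carr m)" using homeo_inj[OF h1] .
  interpret tr: transport m n1 "B1 ` {..<n1}" E "\<lambda>q. f1"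
  proof
    show "brick_partition m (B1 ` {..<n1})" using b1.bp .
    show "\<And>q c. q \<in> B1 ` {..<n1} \<Longrightarrow> valid_brick m c \<Longrightarrow> bset c \<subseteq> bset q \<Longrightarrow>
              valid_brick n1 (E q c) \<and> bset (E q c) = f1 ` bset c" using Eprop by blast
    show "\<And>q. q \<in> B1 ` {..<n1} \<Longrightarrow> inj_on f1 (bset q)"
    proof -
      fix q assume "q \<in> B1 ` {..<n1}"
      then obtain i where i: "i < n1" "q = B1 i" by blast
      have "bset q \<subseteq> carr m" using b1.insub[OF i(1)] i(2) by blast
      then show "inj_on f1 (bset q)" using inj_on_subset[OF f1inj] by blast
    qed
    show "\<And>q q'. q \<in> B1 ` {..<n1} \<Longrightarrow> q' \<in> B1 ` {..<n1} \<Longrightarrow> q \<noteq> q' \<Longrightarrow> f1 ` bset q \<inter> f1 ` bset q' = {}"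
    proof -
      fix q q' assume q: "q \<in> B1 ` {..<n1}" and q': "q' \<in> B1 ` {..<n1}" and ne: "q \<noteq> q'"
      obtain i where i: "i < n1" "q = B1 i" using q by blast
      obtain i' where i': "i' < n1" "q' = B1 i'" using q' by blast
      have "i \<noteq> i'" using ne i i' by blast
      moreover have "fst y = i" if "y \<in> f1 ` bset q" for y using that forest_val[OF F1 i(1)] i(2) by auto
      moreover have "fst y = i'" if "y \<in> f1 ` bset q'" for y using that forest_val[OF F1 i'(1)] i'(2) by auto
      ultimately show "f1 ` bset q \<inter> f1 ` bset q' = {}" by blast
    qed
    show "carr n1 \<subseteq> (\<Union>q\<in>B1 ` {..<n1}. f1 ` bset q)"
    proof
      fix y :: "nat \<times> 'a cpt" assume "y \<in> carr n1"
      then obtain x where x: "x \<in> carr m" "y = f1 x" using homeo_surj[OF h1] by blast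
      then obtain i where "i < n1" "x \<in> bset (B1 i)" using b1.cover by blast
      then show "y \<in> (\<Union>q\<in>B1 ` {..<n1}. f1 ` bset q)" using x by blast
    qed
  qed
  have EE: "E q q = (inv_into {..<n1} B1 q, \<lambda>_. [])" for q by (simp add: E_def wdropw_def)
  have base: "tr.TT (base_part m) = base_part n1"
  proof
    show "tr.TT (base_part m) \<subseteq> base_part n1"
    proof
      fix t assume "t \<in> tr.TT (base_part m)"
      then obtain b q where bq: "b \<in> base_part m" "q \<in> B1 ` {..<n1}" "bset b \<inter> bset q \<noteq> {}" "t = E q (bmeet b q)"
        unfolding tr.TT_def by blast
      obtain i' where b: "b = (i', \<lambda>_. [])" using bq(1) unfolding base_part_def by blast
      obtain i where i: "i < n1" "q = B1 i" using bq(2) by blast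
      have "fst b = fst q" using bset_meet(2)[OF bq(3)] .
      then have "bmeet b q = q" using b bmeet_base by simp
      then have "t = (i, \<lambda>_. [])" using bq(4) EE i b1.binj by (simp add: inv_into_f_f)
      then show "t \<in> base_part n1" using i(1) by (simp add: base_part_def)
    qed
  next
    show "base_part n1 \<subseteq> tr.TT (base_part m)"
    proof
      fix t :: "'a bdesc" assume "t \<in> base_part n1"
      then obtain i where i: "i < n1" "t = (i, \<lambda>_. [])" unfolding base_part_def by blast
      define q where "q = B1 i"
      have fq: "fst q < m" using b1.valid[OF i(1)] by (simp add: q_def valid_brick_def)
      have bq: "(fst q, \<lambda>_. []) \<in> base_part m" using fq by (simp add: base_part_def)
      have "bset q \<subseteq> bset (fst q, \<lambda>_. [])" by (auto simp: bset_def brick_def is_prefix_def)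
      then have ne: "bset (fst q, \<lambda>_. []) \<inter> bset q \<noteq> {}" using bset_nonempty[of q] by blast
      have "E q (bmeet (fst q, \<lambda>_. []) q) = t" using bmeet_base[of q "fst q"] EE i b1.binj
        by (simp add: q_def inv_into_f_f)
      then show "t \<in> tr.TT (base_part m)" using bq ne i(1) unfolding tr.TT_def q_def by blast
    qed
  qed
  define Bf where "Bf j = E (B1 (idx j)) (Bg j)" for j
  have TTg: "tr.TT (Bg ` {..<n}) = Bf ` {..<n}"
  proof
    show "tr.TT (Bg ` {..<n}) \<subseteq> Bf ` {..<n}"
    proof
      fix t assume "t \<in> tr.TT (Bg ` {..<n})"
      then obtain b q where bq: "b \<in> Bg ` {..<n}" "q \<in> B1 ` {..<n1}" "bset b \<inter> bset q \<noteq> {}" "t = E q (bmeet b q)"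
        unfolding tr.TT_def by blast
      obtain j where j: "j < n" "b = Bg j" using bq(1) by blast
      obtain i where i: "i < n1" "q = B1 i" using bq(2) by blast
      obtain x where x: "x \<in> bset (Bg j)" "x \<in> bset (B1 i)" using bq(3) j i by blast
      have "x \<in> bset (B1 (idx j))" using idx[OF j(1)] x(1) by blast
      then have "i = idx j" using b1.uniq[OF i(1) idx(1)[OF j(1)] x(2)] by simp
      then have "bmeet b q = Bg j" using bmeet_sub[OF idx(2)[OF j(1)]] i j by simp
      then show "t \<in> Bf ` {..<n}" using bq(4) i j \<open>i = idx j\<close> by (simp add: Bf_def)
    qed
  next
    show "Bf ` {..<n} \<subseteq> tr.TT (Bg ` {..<n})"
    proof
      fix t assume "t \<in> Bf ` {..<n}"
      then obtain j where j: "j < n" "t = Bf j" by blast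
      have ne: "bset (Bg j) \<inter> bset (B1 (idx j)) \<noteq> {}" using idx[OF j(1)] bset_nonempty[of "Bg j"] by blast
      have "t = E (B1 (idx j)) (bmeet (Bg j) (B1 (idx j)))" using j bmeet_sub[OF idx(2)[OF j(1)]] by (simp add: Bf_def)
      then show "t \<in> tr.TT (Bg ` {..<n})" unfolding tr.TT_def using j idx(1)[OF j(1)] ne by blast
    qed
  qed
  have dy: "dyadic_partition n1 (Bf ` {..<n})"
    using tr.TT_dyadic[OF _ _] base TTg dyadic_base_part Fg unfolding mc_forest_via_def by metis
  have bsBf: "bset (Bf j) = f1 ` bset (Bg j)" if "j < n" for j
    using Eprop[of "B1 (idx j)" "Bg j"] idx[OF that] bg.valid[OF that] by (simp add: Bf_def)
  have injBf: "inj_on Bf {..<n}"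
  proof
    fix j j' assume j: "j \<in> {..<n}" and j': "j' \<in> {..<n}" and e: "Bf j = Bf j'"
    show "j = j'"
    proof (rule ccontr)
      assume ne: "j \<noteq> j'"
      obtain x where x: "x \<in> bset (Bg j)" using bset_nonempty by blast
      have "f1 x \<in> bset (Bf j)" using bsBf j x by auto
      then have "f1 x \<in> bset (Bf j')" using e by simp
      then obtain x' where x': "x' \<in> bset (Bg j')" "f1 x = f1 x'" using bsBf j' by auto
      have "x = x'" using f1inj x x' bg.insub j j' by (meson inj_onD lessThan_iff)
      then show False using bg.uniq x x' ne j j' by blast
    qed
  qed
  have mapf: "\<forall>j<n. \<forall>y\<in>bset (Bf j). f' y = (j, Phi_inv (snd (Bf j)) (snd y))"
  proof (intro allI impI ballI)
    fix j y assume j: "j < n" and y: "y \<in> bset (Bf j)"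
    then obtain x where x: "x \<in> bset (Bg j)" "y = f1 x" using bsBf by blast
    have xm: "x \<in> carr m" using bg.insub[OF j x(1)] .
    have xb: "x \<in> bset (B1 (idx j))" using idx(2)[OF j] x(1) by blast
    have sy: "snd y = Phi_inv (snd (B1 (idx j))) (snd x)" using forest_val[OF F1 idx(1)[OF j] xb] x(2) by simp
    have br: "brick (snd (Bg j)) \<subseteq> brick (snd (B1 (idx j)))" using bset_sub_brick[OF idx(2)[OF j]] by simp
    have "f' y = g x" using x homeo_in[OF h1 xm] inv1[OF xm] by (simp add: f'_def)
    also have "\<dots> = (j, Phi_inv (snd (Bg j)) (snd x))" using forest_val[OF Fg j x(1)] .
    also have "\<dots> = (j, Phi_inv (snd (Bf j)) (snd y))"
      using sy Phi_inv_comp[OF br] by (simp add: Bf_def E_def)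
    finally show "f' y = (j, Phi_inv (snd (Bf j)) (snd y))" .
  qed
  have "mc_forest n1 n f'"
    unfolding mc_forest_def mc_forest_via_def using hf' ext' dy injBf mapf by blast
  moreover have "SV G m n1 f1" using forest_SV[OF F1 G m1] .
  ultimately show ?thesis unfolding cls_le_def using comp by metis
qed



definition elemB :: "nat \<Rightarrow> (nat \<Rightarrow> 'a bdesc) \<Rightarrow> bool" where
  "elemB n B \<longleftrightarrow> (\<forall>j<n. \<forall>s. snd (B j) s \<in> {[], [False], [True]})"

lemma meet_forest:
  assumes F1: "mc_forest_via m n1 f1 B1" and F2: "mc_forest_via m n2 f2 B2"
  shows "\<exists>n0 F0 B0. mc_forest_via m n0 F0 B0 \<and>
     (\<forall>x\<in>carr m. \<forall>y\<in>carr m. fst (F0 x) = fst (F0 y) \<longleftrightarrow> fst (f1 x) = fst (f1 y) \<and> fst (f2 x) = fst (f2 y)) \<and>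
     (elemB n1 B1 \<longrightarrow> elemB n2 B2 \<longrightarrow> elemB n0 B0)"
proof -
  interpret b1: bpart m n1 B1 using forest_bpart[OF F1] .
  interpret b2: bpart m n2 B2 using forest_bpart[OF F2] .
  interpret tr: transport m m "B1 ` {..<n1}" "\<lambda>q c. c" "\<lambda>q. id"
  proof
    show "brick_partition m (B1 ` {..<n1})" using b1.bp .
    show "\<And>q c. q \<in> B1 ` {..<n1} \<Longrightarrow> valid_brick m c \<Longrightarrow> bset c \<subseteq> bset q \<Longrightarrow>
              valid_brick m c \<and> bset c = id ` bset c" by simp
    show "\<And>q. q \<in> B1 ` {..<n1} \<Longrightarrow> inj_on id (bset q)" by simp
    show "\<And>q q'. q \<in> B1 ` {..<n1} \<Longrightarrow> q' \<in> B1 ` {..<n1} \<Longrightarrow> q \<noteq> q' \<Longrightarrow> id ` bset q \<inter> id ` bset q' = {}"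
    proof -
      fix q q' assume q: "q \<in> B1 ` {..<n1}" and q': "q' \<in> B1 ` {..<n1}" and ne: "q \<noteq> q'"
      have "bset q \<inter> bset q' = {}" using b1.bp q q' ne unfolding brick_partition_def by blast
      then show "id ` bset q \<inter> id ` bset q' = {}" by simp
    qed
    show "carr m \<subseteq> (\<Union>q\<in>B1 ` {..<n1}. id ` bset q)"
    proof
      fix x :: "nat \<times> 'a cpt" assume "x \<in> carr m"
      then obtain j where "j < n1" "x \<in> bset (B1 j)" using b1.cover by blast
      then show "x \<in> (\<Union>q\<in>B1 ` {..<n1}. id ` bset q)" by auto
    qed
  qed
  have base: "tr.TT (base_part m) = B1 ` {..<n1}"
  proof
    show "tr.TT (base_part m) \<subseteq> B1 ` {..<n1}"
    proof
      fix t assume "t \<in> tr.TT (base_part m)"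
      then obtain b q where bq: "b \<in> base_part m" "q \<in> B1 ` {..<n1}" "bset b \<inter> bset q \<noteq> {}" "t = bmeet b q"
        unfolding tr.TT_def by blast
      obtain i' where b: "b = (i', \<lambda>_. [])" using bq(1) unfolding base_part_def by blast
      have "fst b = fst q" using bset_meet(2)[OF bq(3)] .
      then have "t = q" using b bmeet_base bq(4) by simp
      then show "t \<in> B1 ` {..<n1}" using bq(2) by simp
    qed
  next
    show "B1 ` {..<n1} \<subseteq> tr.TT (base_part m)"
    proof
      fix q assume q: "q \<in> B1 ` {..<n1}"
      then have fq: "fst q < m" using b1.valid by (auto simp: valid_brick_def)
      have bq: "(fst q, \<lambda>_. []) \<in> base_part m" using fq by (simp add: base_part_def)
      have "bset q \<subseteq> bset (fst q, \<lambda>_. [])" by (auto simp: bset_def brick_def is_prefix_def)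
      then have ne: "bset (fst q, \<lambda>_. []) \<inter> bset q \<noteq> {}" using bset_nonempty[of q] by blast
      have bm: "bmeet (fst q, \<lambda>_. []) q = q" using bmeet_base[of q "fst q"] by simp
      show "q \<in> tr.TT (base_part m)" unfolding tr.TT_def
        by (rule CollectI, rule exI[of _ "(fst q, \<lambda>_. [])"], rule exI[of _ q]) (use bm bq ne q in simp)
    qed
  qed
  define M where "M = tr.TT (B2 ` {..<n2})"
  have dyM: "dyadic_partition m M"
  proof -
    have d1: "dyadic_partition m (B1 ` {..<n1})" using F1 unfolding mc_forest_via_def by blast
    have d2: "dyadic_partition m (B2 ` {..<n2})" using F2 unfolding mc_forest_via_def by blast
    show ?thesis unfolding M_def using tr.TT_dyadic[OF d2] base d1 by simp
  qed
  have finM: "finite M" using dyadic_bp[OF dyM] by (simp add: brick_partition_def)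
  obtain B0 where B0: "bij_betw B0 {0..<card M} M" using ex_bij_betw_nat_finite[OF finM] by blast
  define n0 where "n0 = card M"
  have B0i: "B0 ` {..<n0} = M" "inj_on B0 {..<n0}"
    using B0 by (simp_all add: bij_betw_def n0_def atLeast0LessThan)
  have F0: "mc_forest_via m n0 (fmap m n0 B0) B0"
    by (rule fmap_forest) (simp_all add: B0i dyM)
  have Mset: "\<exists>i<n1. \<exists>j<n2. bset t = bset (B2 j) \<inter> bset (B1 i) \<and> t = bmeet (B2 j) (B1 i)" if "t \<in> M" for t
  proof -
    have "t \<in> tr.TT (B2 ` {..<n2})" using that by (simp add: M_def)
    then obtain b q where bq: "b \<in> B2 ` {..<n2}" "q \<in> B1 ` {..<n1}" "bset b \<inter> bset q \<noteq> {}" "t = bmeet b q"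
      unfolding tr.TT_def by blast
    obtain i where i: "i < n1" "q = B1 i" using bq(2) by blast
    obtain j where j: "j < n2" "b = B2 j" using bq(1) by blast
    have "bset t = bset b \<inter> bset q" using bset_meet(1)[OF bq(3)] bq(4) by simp
    then show ?thesis using i j bq(4) by blast
  qed
  have Min: "bmeet (B2 j) (B1 i) \<in> M" if "i < n1" "j < n2" "bset (B2 j) \<inter> bset (B1 i) \<noteq> {}" for i j
    unfolding M_def tr.TT_def
    by (rule CollectI, rule exI[of _ "B2 j"], rule exI[of _ "B1 i"]) (use that in simp)
  have cell: "(\<exists>k<n0. x \<in> bset (B0 k) \<and> y \<in> bset (B0 k)) \<longleftrightarrow>
     (\<exists>i<n1. x \<in> bset (B1 i) \<and> y \<in> bset (B1 i)) \<and> (\<exists>j<n2. x \<in> bset (B2 j) \<and> y \<in> bset (B2 j))" for x y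
  proof
    assume "\<exists>k<n0. x \<in> bset (B0 k) \<and> y \<in> bset (B0 k)"
    then obtain k where k: "k < n0" "x \<in> bset (B0 k)" "y \<in> bset (B0 k)" by blast
    have "B0 k \<in> M" using B0i(1) k(1) by blast
    then obtain i j where "i < n1" "j < n2" "bset (B0 k) = bset (B2 j) \<inter> bset (B1 i)" using Mset by blast
    then show "(\<exists>i<n1. x \<in> bset (B1 i) \<and> y \<in> bset (B1 i)) \<and> (\<exists>j<n2. x \<in> bset (B2 j) \<and> y \<in> bset (B2 j))"
      using k by blast
  next
    assume "(\<exists>i<n1. x \<in> bset (B1 i) \<and> y \<in> bset (B1 i)) \<and> (\<exists>j<n2. x \<in> bset (B2 j) \<and> y \<in> bset (B2 j))"
    then obtain i j where ij: "i < n1" "j < n2" "x \<in> bset (B1 i)" "y \<in> bset (B1 i)" "x \<in> bset (B2 j)" "y \<in> bset (B2 j)"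
      by blast
    have ne: "bset (B2 j) \<inter> bset (B1 i) \<noteq> {}" using ij by blast
    have inM: "bmeet (B2 j) (B1 i) \<in> M" using Min[OF ij(1,2) ne] .
    then obtain k where k: "k < n0" "B0 k = bmeet (B2 j) (B1 i)" using B0i(1) by (metis imageE lessThan_iff)
    have "bset (B0 k) = bset (B2 j) \<inter> bset (B1 i)" using bset_meet(1)[OF ne] k(2) by simp
    then show "\<exists>k<n0. x \<in> bset (B0 k) \<and> y \<in> bset (B0 k)" using k(1) ij by blast
  qed
  have fib: "\<forall>x\<in>carr m. \<forall>y\<in>carr m. fst (fmap m n0 B0 x) = fst (fmap m n0 B0 y) \<longleftrightarrow> fst (f1 x) = fst (f1 y) \<and> fst (f2 x) = fst (f2 y)"
  proof (intro ballI)
    fix x y :: "nat \<times> 'a cpt" assume x: "x \<in> carr m" and y: "y \<in> carr m"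
    show "fst (fmap m n0 B0 x) = fst (fmap m n0 B0 y) \<longleftrightarrow> fst (f1 x) = fst (f1 y) \<and> fst (f2 x) = fst (f2 y)"
      using forest_same[OF F0 x y] forest_same[OF F1 x y] forest_same[OF F2 x y] cell[of x y] by simp
  qed
  have el: "elemB n0 B0" if e1: "elemB n1 B1" and e2: "elemB n2 B2"
    unfolding elemB_def
  proof (intro allI impI)
    fix k s assume k: "k < n0"
    have "B0 k \<in> M" using B0i(1) k by blast
    then obtain i j where ij: "i < n1" "j < n2" "B0 k = bmeet (B2 j) (B1 i)" using Mset by blast
    have "snd (B0 k) s = snd (B2 j) s \<or> snd (B0 k) s = snd (B1 i) s"
      using ij(3) by (simp add: bmeet_def wmeet_def)
    then show "snd (B0 k) s \<in> {[], [False], [True]}" using e1 e2 ij unfolding elemB_def by metis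
  qed
  show ?thesis using F0 fib el by blast
qed

lemma same_fibers_brick:
  assumes Fg: "mc_forest_via m n g Bg" and F: "mc_forest_via m n0 F B0"
    and S: "\<forall>x\<in>carr m. \<forall>y\<in>carr m. fst (g x) = fst (g y) \<longleftrightarrow> fst (F x) = fst (F y)"
    and j: "j < n"
  shows "\<exists>i<n0. Bg j = B0 i"
proof -
  interpret bg: bpart m n Bg using forest_bpart[OF Fg] .
  interpret b0: bpart m n0 B0 using forest_bpart[OF F] .
  obtain x0 where x0: "x0 \<in> bset (Bg j)" using bset_nonempty by blast
  have x0m: "x0 \<in> carr m" using bg.insub[OF j x0] .
  obtain i where i: "i < n0" "x0 \<in> bset (B0 i)" "fst (F x0) = i" using forest_loc[OF F x0m] by blast
  have gx0: "fst (g x0) = j" using forest_fiber[OF Fg x0m j] x0 by simp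
  have "bset (Bg j) = bset (B0 i)"
  proof
    show "bset (Bg j) \<subseteq> bset (B0 i)"
    proof
      fix x assume x: "x \<in> bset (Bg j)"
      have xm: "x \<in> carr m" using bg.insub[OF j x] .
      have "fst (g x) = fst (g x0)" using forest_fiber[OF Fg xm j] x gx0 by simp
      then have "fst (F x) = i" using S xm x0m i(3) by blast
      then show "x \<in> bset (B0 i)" using forest_fiber[OF F xm i(1)] by simp
    qed
  next
    show "bset (B0 i) \<subseteq> bset (Bg j)"
    proof
      fix x assume x: "x \<in> bset (B0 i)"
      have xm: "x \<in> carr m" using b0.insub[OF i(1) x] .
      have "fst (F x) = fst (F x0)" using forest_fiber[OF F xm i(1)] x i(3) by simp
      then have "fst (g x) = j" using S xm x0m gx0 by blast
      then show "x \<in> bset (Bg j)" using forest_fiber[OF Fg xm j] by simp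
    qed
  qed
  then show ?thesis using bset_inj i(1) by blast
qed



lemma lub_of_forests:
  assumes G: "perm_subgroup G" and m1: "1 \<le> m"
    and F1: "mc_forest_via m n1 f1 B1" and F2: "mc_forest_via m n2 f2 B2"
    and F0: "mc_forest_via m n0 F0 B0"
    and fib: "\<forall>x\<in>carr m. \<forall>y\<in>carr m. fst (F0 x) = fst (F0 y) \<longleftrightarrow> fst (f1 x) = fst (f1 y) \<and> fst (f2 x) = fst (f2 y)"
  shows "is_lub_in G (Fm G m) (cls G m n1 f1) (cls G m n2 f2) (cls G m n0 F0)"
  unfolding is_lub_in_def
proof (intro conjI ballI impI)
  show "cls G m n0 F0 \<in> Fm G m" unfolding Fm_def mc_forest_def using F0 by blast
  show "cls_le G (cls G m n1 f1) (cls G m n0 F0)"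
    by (rule le_of_refine[OF G m1 F1 F0]) (use fib in blast)
  show "cls_le G (cls G m n2 f2) (cls G m n0 F0)"
    by (rule le_of_refine[OF G m1 F2 F0]) (use fib in blast)
next
  fix u' assume u': "u' \<in> Fm G m" and le: "cls_le G (cls G m n1 f1) u' \<and> cls_le G (cls G m n2 f2) u'"
  obtain n' g where g: "u' = cls G m n' g" "mc_forest m n' g" using u' unfolding Fm_def by blast
  obtain Bg where Fg: "mc_forest_via m n' g Bg" using g(2) unfolding mc_forest_def by blast
  have le1: "cls_le G (cls G m n1 f1) (cls G m n' g)" using le g(1) by simp
  have le2: "cls_le G (cls G m n2 f2) (cls G m n' g)" using le g(1) by simp
  have R: "\<forall>x\<in>carr m. \<forall>y\<in>carr m. fst (g x) = fst (g y) \<longrightarrow> fst (F0 x) = fst (F0 y)"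
  proof (intro ballI impI)
    fix x y assume x: "x \<in> carr m" and y: "y \<in> carr m" and e: "fst (g x) = fst (g y)"
    have "fst (f1 x) = fst (f1 y)"
      by (rule refine_of_le[OF G le1 forest_homeo[OF F1] forest_ext[OF F1] forest_homeo[OF Fg] forest_ext[OF Fg] x y e])
    moreover have "fst (f2 x) = fst (f2 y)"
      by (rule refine_of_le[OF G le2 forest_homeo[OF F2] forest_ext[OF F2] forest_homeo[OF Fg] forest_ext[OF Fg] x y e])
    ultimately show "fst (F0 x) = fst (F0 y)" using fib x y by blast
  qed
  show "cls_le G (cls G m n0 F0) u'" using le_of_refine[OF G m1 F0 Fg R] g(1) by simp
qed

lemma elem_of_lub:
  assumes G: "perm_subgroup G" and m1: "1 \<le> m"
    and F1: "mc_forest_via m n1 f1 B1" and F2: "mc_forest_via m n2 f2 B2"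
    and F0: "mc_forest_via m n0 F0 B0" and e0: "elemB n0 B0"
    and fib: "\<forall>x\<in>carr m. \<forall>y\<in>carr m. fst (F0 x) = fst (F0 y) \<longleftrightarrow> fst (f1 x) = fst (f1 y) \<and> fst (f2 x) = fst (f2 y)"
    and lub: "is_lub_in G (Fm G m) (cls G m n1 f1) (cls G m n2 f2) u"
  shows "elem_rep G m u"
proof -
  have L0: "is_lub_in G (Fm G m) (cls G m n1 f1) (cls G m n2 f2) (cls G m n0 F0)"
    using lub_of_forests[OF G m1 F1 F2 F0 fib] .
  have uF: "u \<in> Fm G m" and le1: "cls_le G (cls G m n1 f1) u" and le2: "cls_le G (cls G m n2 f2) u"
    using lub unfolding is_lub_in_def by blast+
  have leu: "cls_le G u (cls G m n0 F0)" using lub L0 unfolding is_lub_in_def by blast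
  obtain n g where g: "u = cls G m n g" "mc_forest m n g" using uF unfolding Fm_def by blast
  obtain Bg where Fg: "mc_forest_via m n g Bg" using g(2) unfolding mc_forest_def by blast
  have S: "\<forall>x\<in>carr m. \<forall>y\<in>carr m. fst (g x) = fst (g y) \<longleftrightarrow> fst (F0 x) = fst (F0 y)"
  proof (intro ballI iffI)
    fix x y assume x: "x \<in> carr m" and y: "y \<in> carr m" and e: "fst (g x) = fst (g y)"
    have "fst (f1 x) = fst (f1 y)"
      using refine_of_le[OF G _ forest_homeo[OF F1] forest_ext[OF F1] forest_homeo[OF Fg] forest_ext[OF Fg] x y e] le1 g(1)
      by simp
    moreover have "fst (f2 x) = fst (f2 y)"
      using refine_of_le[OF G _ forest_homeo[OF F2] forest_ext[OF F2] forest_homeo[OF Fg] forest_ext[OF Fg] x y e] le2 g(1)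
      by simp
    ultimately show "fst (F0 x) = fst (F0 y)" using fib x y by blast
  next
    fix x y assume x: "x \<in> carr m" and y: "y \<in> carr m" and e: "fst (F0 x) = fst (F0 y)"
    show "fst (g x) = fst (g y)"
      using refine_of_le[OF G _ forest_homeo[OF Fg] forest_ext[OF Fg] forest_homeo[OF F0] forest_ext[OF F0] x y e] leu g(1)
      by simp
  qed
  have "\<forall>j<n. \<forall>s. snd (Bg j) s \<in> {[], [False], [True]}"
  proof (intro allI impI)
    fix j s assume j: "j < n"
    obtain i where "i < n0" "Bg j = B0 i" using same_fibers_brick[OF Fg F0 S j] by blast
    then show "snd (Bg j) s \<in> {[], [False], [True]}" using e0 unfolding elemB_def by simp
  qed
  then have "elem_mc_forest m n g" unfolding elem_mc_forest_def using Fg by blast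
  then show ?thesis unfolding elem_rep_def using g(1) by blast
qed

theorem proposition5p3:
  fixes G :: "('a \<Rightarrow> 'a) set" and m :: nat
  assumes "perm_subgroup G" and "1 \<le> m"
    and "v1 \<in> Fm G m" and "v2 \<in> Fm G m"
  shows "(\<exists>u. is_lub_in G (Fm G m) v1 v2 u) \<and>
         (\<forall>u. is_lub_in G (Fm G m) v1 v2 u \<longrightarrow>
              elem_rep G m v1 \<longrightarrow> elem_rep G m v2 \<longrightarrow> elem_rep G m u)"
proof (intro conjI allI impI)
  obtain n1 f1 where v1: "v1 = cls G m n1 f1" "mc_forest m n1 f1" using assms(3) unfolding Fm_def by blast
  obtain B1 where F1: "mc_forest_via m n1 f1 B1" using v1(2) unfolding mc_forest_def by blast
  obtain n2 f2 where v2: "v2 = cls G m n2 f2" "mc_forest m n2 f2" using assms(4) unfolding Fm_def by blast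
  obtain B2 where F2: "mc_forest_via m n2 f2 B2" using v2(2) unfolding mc_forest_def by blast
  obtain n0 F0 B0 where F0: "mc_forest_via m n0 F0 B0"
    and fib: "\<forall>x\<in>carr m. \<forall>y\<in>carr m. fst (F0 x) = fst (F0 y) \<longleftrightarrow> fst (f1 x) = fst (f1 y) \<and> fst (f2 x) = fst (f2 y)"
    using meet_forest[OF F1 F2] by blast
  show "\<exists>u. is_lub_in G (Fm G m) v1 v2 u"
    using lub_of_forests[OF assms(1,2) F1 F2 F0 fib] v1(1) v2(1) by blast
next
  fix u assume lub: "is_lub_in G (Fm G m) v1 v2 u" and e1: "elem_rep G m v1" and e2: "elem_rep G m v2"
  obtain n1 f1 where v1: "v1 = cls G m n1 f1" "elem_mc_forest m n1 f1" using e1 unfolding elem_rep_def by blast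
  obtain B1 where F1: "mc_forest_via m n1 f1 B1" "elemB n1 B1"
    using v1(2) unfolding elem_mc_forest_def elemB_def by blast
  obtain n2 f2 where v2: "v2 = cls G m n2 f2" "elem_mc_forest m n2 f2" using e2 unfolding elem_rep_def by blast
  obtain B2 where F2: "mc_forest_via m n2 f2 B2" "elemB n2 B2"
    using v2(2) unfolding elem_mc_forest_def elemB_def by blast
  obtain n0 F0 B0 where F0: "mc_forest_via m n0 F0 B0"
    and fib: "\<forall>x\<in>carr m. \<forall>y\<in>carr m. fst (F0 x) = fst (F0 y) \<longleftrightarrow> fst (f1 x) = fst (f1 y) \<and> fst (f2 x) = fst (f2 y)"
    and el: "elemB n0 B0"
    using meet_forest[OF F1(1) F2(1)] F1(2) F2(2) by blast
  show "elem_rep G m u"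
    by (rule elem_of_lub[OF assms(1,2) F1(1) F2(1) F0 el fib]) (use lub v1(1) v2(1) in simp)
qed

end
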